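(* Let $(X,\kappa)$ be a finite digital image and $f:X\to X$ a continuous self-map with $L(f)\neq 0$. Then there is a simplex $\sigma\subseteq X$ (a nonempty set of pairwise adjacent points) with $f(\sigma)=\sigma$.
   Context: A digital image is a pair $(X,\kappa)$ where $X$ is a set and $\kappa$ is a symmetric irreflexive relation on $X$ (the adjacency). Write $x\leftrightarrow y$ if adjacent, $x\Leftrightarrow y$ if adjacent or equal. A map $f$ is continuous if $x\leftrightarrow y$ implies $f(x)\Leftrightarrow f(y)$. Simplicial homology: a $q$-simplex of $X$ is a set of $q+1$ pairwise adjacent points. $C_q(X)$ is the free abelian group generated by ordered $q$-simplices $\langle x_0,\dots,x_q\rangle$ modulo $\langle x_{\rho(0)},\dots,x_{\rho(q)}\rangle=\operatorname{sgn}(\rho)\langle x_0,\dots,x_q\rangle$, with boundary $\partial\langle x_0,\dots,x_q\rangle=\sum_{i=0}^q(-1)^i\langle x_0,\dots,\widehat{x_i},\dots,x_q\rangle$; $H_q(X)$ is its homology. For continuous $f$, $f_q\langle p_0,\dots,p_q\rangle=\langle f(p_0),\dots,f(p_q)\rangle$ (interpreted as $0$ if the image has fewer than $q+1$ points); this is a chain map inducing $f_{*,q}$ on $H_q$. The simplicial Lefschetz number of a self-map $f$ of a finite image is $L(f)=\sum_{q\ge0}(-1)^q\operatorname{tr}(f_{*,q})$, traces taken on $H_q(X)\otimes\mathbb Q$. *)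

theory Defs
  imports Complex_Main "HOL-Combinatorics.Permutations"
begin

text \<open>Chains with rational coefficients are modelled as alternating rational-valued functions
on ordered simplices (lists of distinct pairwise adjacent points); this is C_q(X) tensor Q.\<close>

definition digital_image :: "'a set \<Rightarrow> ('a \<Rightarrow> 'a \<Rightarrow> bool) \<Rightarrow> bool" where
  "digital_image X adj \<longleftrightarrow>
     (\<forall>x\<in>X. \<forall>y\<in>X. adj x y \<longrightarrow> adj y x) \<and> (\<forall>x\<in>X. \<not> adj x x)"

definition dcontinuous :: "'a set \<Rightarrow> ('a \<Rightarrow> 'a \<Rightarrow> bool) \<Rightarrow> ('a \<Rightarrow> 'a) \<Rightarrow> bool" where
  "dcontinuous X adj f \<longleftrightarrow> f ` X \<subseteq> X \<and>
     (\<forall>x\<in>X. \<forall>y\<in>X. adj x y \<longrightarrow> (f x = f y \<or> adj (f x) (f y)))"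

definition is_simplex :: "'a set \<Rightarrow> ('a \<Rightarrow> 'a \<Rightarrow> bool) \<Rightarrow> 'a set \<Rightarrow> bool" where
  "is_simplex X adj \<sigma> \<longleftrightarrow> \<sigma> \<noteq> {} \<and> \<sigma> \<subseteq> X \<and> (\<forall>x\<in>\<sigma>. \<forall>y\<in>\<sigma>. x \<noteq> y \<longrightarrow> adj x y)"

definition osimplex :: "'a set \<Rightarrow> ('a \<Rightarrow> 'a \<Rightarrow> bool) \<Rightarrow> nat \<Rightarrow> 'a list \<Rightarrow> bool" where
  "osimplex X adj q s \<longleftrightarrow> length s = Suc q \<and> distinct s \<and> set s \<subseteq> X \<and>
     (\<forall>x\<in>set s. \<forall>y\<in>set s. x \<noteq> y \<longrightarrow> adj x y)"

definition permute_list_by :: "(nat \<Rightarrow> nat) \<Rightarrow> 'a list \<Rightarrow> 'a list" where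
  "permute_list_by p s = map (\<lambda>i. s ! p i) [0..<length s]"

definition chains :: "'a set \<Rightarrow> ('a \<Rightarrow> 'a \<Rightarrow> bool) \<Rightarrow> nat \<Rightarrow> ('a list \<Rightarrow> rat) set" where
  "chains X adj q = {c. (\<forall>s. \<not> osimplex X adj q s \<longrightarrow> c s = 0) \<and>
     (\<forall>s p. osimplex X adj q s \<longrightarrow> p permutes {..<Suc q} \<longrightarrow>
        c (permute_list_by p s) = of_int (sign p) * c s)}"

text \<open>the chain corresponding to the generator <x_0,...,x_q>\<close>
definition gen :: "'a list \<Rightarrow> 'a list \<Rightarrow> rat" where
  "gen s t = (if \<exists>p. p permutes {..<length s} \<and> t = permute_list_by p s
              then of_int (sign (SOME p. p permutes {..<length s} \<and> t = permute_list_by p s))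
              else 0)"

definition del_nth :: "nat \<Rightarrow> 'a list \<Rightarrow> 'a list" where
  "del_nth i s = take i s @ drop (Suc i) s"

text \<open>boundary C_q \<rightarrow> C_{q-1} (for q > 0), linear extension of
  <x_0..x_q> \<mapsto> sum_i (-1)^i <x_0..^x_i..x_q>; each unordered simplex occurs (q+1)! times\<close>
definition bdry :: "'a set \<Rightarrow> ('a \<Rightarrow> 'a \<Rightarrow> bool) \<Rightarrow> nat \<Rightarrow> ('a list \<Rightarrow> rat) \<Rightarrow> ('a list \<Rightarrow> rat)" where
  "bdry X adj q c = (\<lambda>t. \<Sum>s\<in>{s. osimplex X adj q s}.
      c s / of_nat (fact (Suc q)) * (\<Sum>i<Suc q. (-1) ^ i * gen (del_nth i s) t))"

definition cycles :: "'a set \<Rightarrow> ('a \<Rightarrow> 'a \<Rightarrow> bool) \<Rightarrow> nat \<Rightarrow> ('a list \<Rightarrow> rat) set" where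
  "cycles X adj q = {c \<in> chains X adj q. q = 0 \<or> bdry X adj q c = (\<lambda>_. 0)}"

definition boundaries :: "'a set \<Rightarrow> ('a \<Rightarrow> 'a \<Rightarrow> bool) \<Rightarrow> nat \<Rightarrow> ('a list \<Rightarrow> rat) set" where
  "boundaries X adj q = bdry X adj (Suc q) ` chains X adj (Suc q)"

text \<open>induced chain map f_q, linear extension of <p_0..p_q> \<mapsto> <f p_0..f p_q> (0 if degenerate)\<close>
definition chain_map :: "'a set \<Rightarrow> ('a \<Rightarrow> 'a \<Rightarrow> bool) \<Rightarrow> ('a \<Rightarrow> 'a) \<Rightarrow> nat \<Rightarrow> ('a list \<Rightarrow> rat) \<Rightarrow> ('a list \<Rightarrow> rat)" where
  "chain_map X adj f q c = (\<lambda>t. \<Sum>s\<in>{s. osimplex X adj q s}.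
      c s / of_nat (fact (Suc q)) * (if distinct (map f s) then gen (map f s) t else 0))"

definition lin_comb :: "('b \<Rightarrow> rat) list \<Rightarrow> (nat \<Rightarrow> rat) \<Rightarrow> ('b \<Rightarrow> rat)" where
  "lin_comb hs a = (\<lambda>t. \<Sum>i<length hs. a i * (hs ! i) t)"

text \<open>hs is a list of representatives of a basis of the quotient space Z/B\<close>
definition quot_basis :: "('b \<Rightarrow> rat) set \<Rightarrow> ('b \<Rightarrow> rat) set \<Rightarrow> ('b \<Rightarrow> rat) list \<Rightarrow> bool" where
  "quot_basis Z B hs \<longleftrightarrow> set hs \<subseteq> Z \<and>
     (\<forall>z\<in>Z. \<exists>a. (\<lambda>t. z t - lin_comb hs a t) \<in> B) \<and>
     (\<forall>a. lin_comb hs a \<in> B \<longrightarrow> (\<forall>i<length hs. a i = 0))"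

definition quot_trace :: "('b \<Rightarrow> rat) set \<Rightarrow> ('b \<Rightarrow> rat) set \<Rightarrow> (('b \<Rightarrow> rat) \<Rightarrow> ('b \<Rightarrow> rat)) \<Rightarrow> rat" where
  "quot_trace Z B g = (let hs = (SOME hs. quot_basis Z B hs);
      A = (\<lambda>i. SOME a. (\<lambda>t. g (hs ! i) t - lin_comb hs a t) \<in> B)
    in \<Sum>i<length hs. A i i)"

text \<open>simplicial Lefschetz number; H_q = 0 for q \<ge> card X since there are no q-simplices\<close>
definition lefschetz :: "'a set \<Rightarrow> ('a \<Rightarrow> 'a \<Rightarrow> bool) \<Rightarrow> ('a \<Rightarrow> 'a) \<Rightarrow> rat" where
  "lefschetz X adj f = (\<Sum>q<card X. (-1) ^ q *
      quot_trace (cycles X adj q) (boundaries X adj q) (chain_map X adj f q))"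

end

theory Submission
  imports Defs
begin

definition subsp :: "('b \<Rightarrow> rat) set \<Rightarrow> bool" where
  "subsp S \<longleftrightarrow> (\<lambda>_. 0) \<in> S \<and> (\<forall>x\<in>S. \<forall>y\<in>S. (\<lambda>t. x t + y t) \<in> S) \<and> (\<forall>c. \<forall>x\<in>S. (\<lambda>t. c * x t) \<in> S)"

definition linmap :: "(('b \<Rightarrow> rat) \<Rightarrow> ('c \<Rightarrow> rat)) \<Rightarrow> bool" where
  "linmap g \<longleftrightarrow> (\<forall>x y. g (\<lambda>t. x t + y t) = (\<lambda>t. g x t + g y t)) \<and> (\<forall>c x. g (\<lambda>t. c * x t) = (\<lambda>t. c * g x t))"

lemma subsp_0: "subsp S \<Longrightarrow> (\<lambda>_. 0) \<in> S" by (simp add: subsp_def)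
lemma subsp_add: "subsp S \<Longrightarrow> x \<in> S \<Longrightarrow> y \<in> S \<Longrightarrow> (\<lambda>t. x t + y t) \<in> S" by (simp add: subsp_def)
lemma subsp_scale: "subsp S \<Longrightarrow> x \<in> S \<Longrightarrow> (\<lambda>t. c * x t) \<in> S" by (simp add: subsp_def)
lemma subsp_diff: assumes "subsp S" "x \<in> S" "y \<in> S" shows "(\<lambda>t. x t - y t) \<in> S"
proof -
  have "(\<lambda>t. x t + (\<lambda>t. (-1) * y t) t) \<in> S" by (rule subsp_add[OF assms(1,2) subsp_scale[OF assms(1,3)]])
  then show ?thesis by simp
qed

lemma subsp_sum: fixes n :: nat assumes "subsp S" "\<And>j. j < n \<Longrightarrow> b j \<in> S"
  shows "(\<lambda>t. \<Sum>j<n. \<beta> j * b j t) \<in> S"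
  using assms(2)
proof (induction n)
  case 0 then show ?case using subsp_0[OF assms(1)] by simp
next
  case (Suc n)
  have "(\<lambda>t. (\<lambda>t. \<Sum>j<n. \<beta> j * b j t) t + (\<lambda>t. \<beta> n * b n t) t) \<in> S"
    using Suc by (intro subsp_add subsp_scale assms(1)) auto
  then show ?case by simp
qed

lemma lin_comb_in: "subsp S \<Longrightarrow> set hs \<subseteq> S \<Longrightarrow> lin_comb hs a \<in> S"
  unfolding lin_comb_def by (rule subsp_sum) auto

lemma lin_comb_diff_coef: "lin_comb hs (\<lambda>i. a i - b i) = (\<lambda>t. lin_comb hs a t - lin_comb hs b t)"
  by (simp add: lin_comb_def left_diff_distrib sum_subtractf)

lemma linmap_add: "linmap g \<Longrightarrow> g (\<lambda>t. x t + y t) = (\<lambda>t. g x t + g y t)" by (simp add: linmap_def)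
lemma linmap_scale: "linmap g \<Longrightarrow> g (\<lambda>t. c * x t) = (\<lambda>t. c * g x t)" by (simp add: linmap_def)
lemma linmap_0: "linmap g \<Longrightarrow> g (\<lambda>_. 0) = (\<lambda>_. 0)"
proof -
  assume "linmap g"
  from linmap_scale[OF this, of 0 "\<lambda>_. 0"] show ?thesis by simp
qed
lemma linmap_diff: assumes "linmap g" shows "g (\<lambda>t. x t - y t) = (\<lambda>t. g x t - g y t)"
proof -
  have "g (\<lambda>t. x t + (\<lambda>t. (-1) * y t) t) = (\<lambda>t. g x t + g (\<lambda>t. (-1) * y t) t)" using assms by (rule linmap_add)
  also have "\<dots> = (\<lambda>t. g x t - g y t)" using linmap_scale[OF assms, of "-1" y] by simp
  finally show ?thesis by simp
qed
lemma linmap_sum: fixes n :: nat assumes "linmap g" shows "g (\<lambda>t. \<Sum>j<n. \<beta> j * b j t) = (\<lambda>t. \<Sum>j<n. \<beta> j * g (b j) t)"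
proof (induction n)
  case 0 then show ?case using linmap_0[OF assms] by simp
next
  case (Suc n)
  have "g (\<lambda>t. (\<lambda>t. \<Sum>j<n. \<beta> j * b j t) t + (\<lambda>t. \<beta> n * b n t) t) = (\<lambda>t. g (\<lambda>t. \<Sum>j<n. \<beta> j * b j t) t + g (\<lambda>t. \<beta> n * b n t) t)"
    by (rule linmap_add[OF assms])
  then show ?case using Suc linmap_scale[OF assms] by simp
qed
lemma linmap_lin_comb: "linmap g \<Longrightarrow> g (lin_comb hs a) = lin_comb (map g hs) a"
  unfolding lin_comb_def by (simp add: linmap_sum)

definition coords :: "('b \<Rightarrow> rat) set \<Rightarrow> ('b \<Rightarrow> rat) list \<Rightarrow> ('b \<Rightarrow> rat) \<Rightarrow> nat \<Rightarrow> rat" where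
  "coords B hs v = (SOME a. (\<lambda>t. v t - lin_comb hs a t) \<in> B)"

definition trace_wrt :: "('b \<Rightarrow> rat) set \<Rightarrow> ('b \<Rightarrow> rat) list \<Rightarrow> (('b \<Rightarrow> rat) \<Rightarrow> ('b \<Rightarrow> rat)) \<Rightarrow> rat" where
  "trace_wrt B hs g = (\<Sum>i<length hs. coords B hs (g (hs ! i)) i)"

lemma quot_trace_eq: "quot_trace Z B g = trace_wrt B (SOME hs. quot_basis Z B hs) g"
  unfolding quot_trace_def trace_wrt_def coords_def Let_def ..

lemma coords_spec: assumes "quot_basis Z B hs" "v \<in> Z" shows "(\<lambda>t. v t - lin_comb hs (coords B hs v) t) \<in> B"
proof -
  have "\<exists>a. (\<lambda>t. v t - lin_comb hs a t) \<in> B" using assms unfolding quot_basis_def by blast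
  then show ?thesis unfolding coords_def by (rule someI_ex)
qed

lemma coords_unique:
  assumes qb: "quot_basis Z B hs" and sB: "subsp B"
    and v1: "(\<lambda>t. v t - lin_comb hs a t) \<in> B" and v2: "(\<lambda>t. v t - lin_comb hs b t) \<in> B" and i: "i < length hs"
  shows "a i = b i"
proof -
  have "(\<lambda>t. (\<lambda>t. v t - lin_comb hs b t) t - (\<lambda>t. v t - lin_comb hs a t) t) \<in> B"
    using subsp_diff[OF sB v2 v1] .
  then have "lin_comb hs (\<lambda>i. a i - b i) \<in> B" by (simp add: lin_comb_diff_coef)
  then show ?thesis using qb i unfolding quot_basis_def by auto
qed

lemma coords_eq:
  assumes "quot_basis Z B hs" "subsp B" "v \<in> Z" "(\<lambda>t. v t - lin_comb hs a t) \<in> B" "i < length hs"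
  shows "coords B hs v i = a i"
  using coords_unique[OF assms(1,2) coords_spec[OF assms(1,3)] assms(4,5)] .

lemma linmap_id: "linmap (\<lambda>x. x)" by (simp add: linmap_def)

lemma lin_comb_delta: "l < length hs \<Longrightarrow> lin_comb hs (\<lambda>i. if i = l then 1 else 0) = hs ! l"
proof (rule ext)
  fix t assume l: "l < length hs"
  have "(\<Sum>i<length hs. (if i = l then 1 else 0) * (hs ! i) t) = (\<Sum>i<length hs. if i = l then (hs ! i) t else 0)"
    by (rule sum.cong) auto
  then show "lin_comb hs (\<lambda>i. if i = l then 1 else 0) t = (hs ! l) t" using l by (simp add: lin_comb_def)
qed

lemma coords_delta:
  assumes "quot_basis Z B hs" "subsp B" "l < length hs" "i < length hs"
  shows "coords B hs (hs ! l) i = (if i = l then 1 else 0)"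
proof -
  have "hs ! l \<in> Z" using assms unfolding quot_basis_def by auto
  moreover have "(\<lambda>t. (hs ! l) t - lin_comb hs (\<lambda>i. if i = l then 1 else 0) t) \<in> B"
    using lin_comb_delta[OF assms(3)] subsp_0[OF assms(2)] by simp
  ultimately show ?thesis using coords_eq[OF assms(1,2)] assms(4) by blast
qed

lemma coords_general:
  assumes qh: "quot_basis Z B hs" and qk: "quot_basis Z B ks" and sB: "subsp B" and sZ: "subsp Z"
    and g: "linmap g" "g ` Z \<subseteq> Z" "g ` B \<subseteq> B" and v: "v \<in> Z" and l: "l < length hs"
  shows "coords B hs (g v) l = (\<Sum>j<length ks. coords B ks v j * coords B hs (g (ks ! j)) l)"
proof -
  define c where "c = coords B ks v"
  define d where "d = (\<lambda>j. coords B hs (g (ks ! j)))"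
  define a where "a = (\<lambda>i. \<Sum>j<length ks. c j * d j i)"
  have ksZ: "ks ! j \<in> Z" if "j < length ks" for j using qk that unfolding quot_basis_def by auto
  have gv: "g v \<in> Z" using g v by auto
  have Y: "(\<lambda>t. \<Sum>j<length ks. c j * (\<lambda>t. g (ks ! j) t - lin_comb hs (d j) t) t) \<in> B"
    apply (rule subsp_sum[OF sB])
    unfolding d_def using coords_spec[OF qh] g ksZ by blast
  have X: "g (\<lambda>t. v t - lin_comb ks c t) \<in> B"
    using coords_spec[OF qk v] g unfolding c_def by blast
  have eq: "(\<lambda>t. g v t - lin_comb hs a t) = (\<lambda>t. g (\<lambda>t. v t - lin_comb ks c t) t + (\<lambda>t. \<Sum>j<length ks. c j * (\<lambda>t. g (ks ! j) t - lin_comb hs (d j) t) t) t)"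
  proof
    fix t
    have L: "lin_comb hs a t = (\<Sum>j<length ks. c j * lin_comb hs (d j) t)"
      unfolding lin_comb_def a_def
      by (simp add: sum_distrib_right sum_distrib_left mult.assoc sum.swap[where A="{..<length hs}"])
    have G: "g (\<lambda>t. v t - lin_comb ks c t) t = g v t - (\<Sum>j<length ks. c j * g (ks ! j) t)"
      using linmap_diff[OF g(1)] linmap_lin_comb[OF g(1)] by (simp add: lin_comb_def)
    show "g v t - lin_comb hs a t = g (\<lambda>t. v t - lin_comb ks c t) t + (\<Sum>j<length ks. c j * (\<lambda>t. g (ks ! j) t - lin_comb hs (d j) t) t)"
      unfolding L G by (simp add: right_diff_distrib sum_subtractf)
  qed
  have "(\<lambda>t. g v t - lin_comb hs a t) \<in> B" unfolding eq by (rule subsp_add[OF sB X Y])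
  then have "coords B hs (g v) l = a l" using coords_eq[OF qh sB gv _ l] by blast
  then show ?thesis unfolding a_def c_def d_def .
qed

lemma trace_invariant:
  assumes qh: "quot_basis Z B hs" and qk: "quot_basis Z B ks" and sB: "subsp B" and sZ: "subsp Z"
    and g: "linmap g" "g ` Z \<subseteq> Z" "g ` B \<subseteq> B"
  shows "trace_wrt B ks g = trace_wrt B hs g"
proof -
  have hsZ: "hs ! j \<in> Z" if "j < length hs" for j using qh that unfolding quot_basis_def by auto
  have ksZ: "ks ! j \<in> Z" if "j < length ks" for j using qk that unfolding quot_basis_def by auto
  have idl: "linmap (\<lambda>x. x)" "(\<lambda>x. x) ` Z \<subseteq> Z" "(\<lambda>x. x) ` B \<subseteq> B" by (auto simp: linmap_id)
  note gen_id = coords_general[OF _ _ sB sZ idl, simplified]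
  let ?ch = "coords B hs" and ?ck = "coords B ks"
  have s1: "?ck (g (ks ! j)) j = (\<Sum>l<length hs. ?ch (g (ks ! j)) l * ?ck (hs ! l) j)"
    if "j < length ks" for j using gen_id[OF qk qh, of "g (ks ! j)" j] g(2) ksZ that by auto
  have s2: "?ch (g (ks ! j)) l = (\<Sum>i<length hs. ?ch (ks ! j) i * ?ch (g (hs ! i)) l)"
    if "j < length ks" "l < length hs" for j l using coords_general[OF qh qh sB sZ g, of "ks ! j" l] ksZ that by auto
  have s4: "(\<Sum>j<length ks. ?ck (hs ! l) j * ?ch (ks ! j) i) = ?ch (hs ! l) i"
    if "i < length hs" "l < length hs" for i l using gen_id[OF qh qk, of "hs ! l" i] hsZ that by auto
  have "trace_wrt B ks g = (\<Sum>j<length ks. \<Sum>l<length hs. (\<Sum>i<length hs. ?ch (ks ! j) i * ?ch (g (hs ! i)) l) * ?ck (hs ! l) j)"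
    unfolding trace_wrt_def by (intro sum.cong refl) (simp add: s1 s2)
  also have "\<dots> = (\<Sum>l<length hs. \<Sum>i<length hs. ?ch (g (hs ! i)) l * (\<Sum>j<length ks. ?ck (hs ! l) j * ?ch (ks ! j) i))"
    apply (subst sum.swap)
    by (simp add: sum_distrib_left sum_distrib_right mult_ac sum.swap[where A="{..<length ks}"])
  also have "\<dots> = (\<Sum>l<length hs. \<Sum>i<length hs. ?ch (g (hs ! i)) l * (if l = i then 1 else 0))"
    by (intro sum.cong refl) (simp add: s4 coords_delta[OF qh sB])
  also have "\<dots> = trace_wrt B hs g"
    unfolding trace_wrt_def by (intro sum.cong refl) (simp add: if_distrib[where f="\<lambda>x. _ * x"] cong: if_cong)
  finally show ?thesis .
qed

lemma quot_trace_basis: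
  assumes "quot_basis Z B hs" "subsp B" "subsp Z" "linmap g" "g ` Z \<subseteq> Z" "g ` B \<subseteq> B"
  shows "quot_trace Z B g = trace_wrt B hs g"
proof -
  have "quot_basis Z B (SOME hs. quot_basis Z B hs)" using assms(1) by (rule someI)
  then show ?thesis unfolding quot_trace_eq using trace_invariant assms by blast
qed

lemma lin_comb_cong: "(\<And>i. i < length hs \<Longrightarrow> a i = b i) \<Longrightarrow> lin_comb hs a = lin_comb hs b"
  unfolding lin_comb_def by (intro ext sum.cong) auto

lemma lin_comb_zero: "(\<And>i. i < length hs \<Longrightarrow> a i = 0) \<Longrightarrow> lin_comb hs a = (\<lambda>_. 0)"
  unfolding lin_comb_def by (intro ext sum.neutral) auto

lemma sum_lessThan_add_nat: fixes m n :: nat shows "(\<Sum>i<m + n. f i) = (\<Sum>i<m. f i) + (\<Sum>j<n. f (m + j)::rat)"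
  by (induction n) auto

lemma lin_comb_append: "lin_comb (hs @ ks) c = (\<lambda>t. lin_comb hs c t + lin_comb ks (\<lambda>j. c (length hs + j)) t)"
  unfolding lin_comb_def by (auto simp: sum_lessThan_add_nat nth_append)

lemma coords_in_zero:
  assumes "quot_basis U V hs" "subsp V" "V \<subseteq> U" "v \<in> V" "i < length hs"
  shows "coords V hs v i = 0"
proof -
  have "(\<lambda>t. v t - lin_comb hs (\<lambda>_. 0) t) \<in> V" using assms(4) lin_comb_zero[of hs "\<lambda>_. 0"] by simp
  then show ?thesis using coords_eq[OF assms(1,2)] assms by blast
qed

lemma quot_basis_append:
  assumes sW: "subsp W" and sV: "subsp V" and sU: "subsp U" and WV: "W \<subseteq> V" and VU: "V \<subseteq> U"
    and qh: "quot_basis U V hs" and qk: "quot_basis V W ks"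
  shows "quot_basis U W (hs @ ks)"
    and "\<And>u i. u \<in> U \<Longrightarrow> i < length (hs @ ks) \<Longrightarrow> coords W (hs @ ks) u i =
            (if i < length hs then coords V hs u i else coords W ks (\<lambda>t. u t - lin_comb hs (coords V hs u) t) (i - length hs))"
proof -
  define cc where "cc u = (\<lambda>i. if i < length hs then coords V hs u i else coords W ks (\<lambda>t. u t - lin_comb hs (coords V hs u) t) (i - length hs))" for u
  have span: "(\<lambda>t. u t - lin_comb (hs @ ks) (cc u) t) \<in> W" if u: "u \<in> U" for u
  proof -
    let ?r = "\<lambda>t. u t - lin_comb hs (coords V hs u) t"
    have r: "?r \<in> V" using coords_spec[OF qh u] .
    have "(\<lambda>t. ?r t - lin_comb ks (coords W ks ?r) t) \<in> W" using coords_spec[OF qk r] .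
    moreover have "lin_comb hs (cc u) = lin_comb hs (coords V hs u)" by (rule lin_comb_cong) (simp add: cc_def)
    moreover have "(\<lambda>j. cc u (length hs + j)) = coords W ks ?r" by (simp add: cc_def)
    ultimately show ?thesis by (simp add: lin_comb_append diff_diff_eq)
  qed
  have indep: "\<forall>i<length (hs @ ks). c i = 0" if c: "lin_comb (hs @ ks) c \<in> W" for c
  proof -
    let ?c' = "\<lambda>j. c (length hs + j)"
    have kV: "lin_comb ks ?c' \<in> V" using lin_comb_in[OF sV] qk unfolding quot_basis_def by blast
    have "lin_comb (hs @ ks) c \<in> V" using c WV by auto
    then have "(\<lambda>t. (\<lambda>t. lin_comb hs c t + lin_comb ks ?c' t) t - lin_comb ks ?c' t) \<in> V"
      unfolding lin_comb_append by (rule subsp_diff[OF sV _ kV])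
    then have "lin_comb hs c \<in> V" by simp
    then have c1: "\<forall>i<length hs. c i = 0" using qh unfolding quot_basis_def by blast
    then have "lin_comb hs c = (\<lambda>_. 0)" by (intro lin_comb_zero) auto
    then have "lin_comb ks ?c' \<in> W" using c unfolding lin_comb_append by simp
    then have c2: "\<forall>j<length ks. ?c' j = 0" using qk unfolding quot_basis_def by blast
    show ?thesis
    proof (intro allI impI)
      fix i assume "i < length (hs @ ks)"
      then show "c i = 0" using c1 c2[rule_format, of "i - length hs"] by (cases "i < length hs") auto
    qed
  qed
  show qb: "quot_basis U W (hs @ ks)"
    unfolding quot_basis_def
  proof (intro conjI)
    show "set (hs @ ks) \<subseteq> U" using qh qk VU unfolding quot_basis_def by auto
    show "\<forall>z\<in>U. \<exists>a. (\<lambda>t. z t - lin_comb (hs @ ks) a t) \<in> W" using span by blast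
    show "\<forall>a. lin_comb (hs @ ks) a \<in> W \<longrightarrow> (\<forall>i<length (hs @ ks). a i = 0)" using indep by blast
  qed
  show "coords W (hs @ ks) u i = cc u i" if "u \<in> U" "i < length (hs @ ks)" for u i
    using coords_eq[OF qb sW that(1) span[OF that(1)] that(2)] .
qed

lemma trace_append:
  assumes sW: "subsp W" and sV: "subsp V" and sU: "subsp U" and WV: "W \<subseteq> V" and VU: "V \<subseteq> U"
    and qh: "quot_basis U V hs" and qk: "quot_basis V W ks"
    and g: "linmap g" "g ` U \<subseteq> U" "g ` V \<subseteq> V" "g ` W \<subseteq> W"
  shows "trace_wrt W (hs @ ks) g = trace_wrt V hs g + trace_wrt W ks g"
proof -
  note cw = quot_basis_append(2)[OF sW sV sU WV VU qh qk]
  have hU: "hs ! i \<in> U" if "i < length hs" for i using qh that unfolding quot_basis_def by auto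
  have kV: "ks ! j \<in> V" if "j < length ks" for j using qk that unfolding quot_basis_def by auto
  have a: "coords W (hs @ ks) (g ((hs @ ks) ! i)) i = coords V hs (g (hs ! i)) i" if "i < length hs" for i
    using cw[of "g (hs ! i)" i] hU[OF that] g that by (auto simp: nth_append)
  have b: "coords W (hs @ ks) (g (ks ! j)) (length hs + j) = coords W ks (g (ks ! j)) j"
    if "j < length ks" for j
  proof -
    have gv: "g (ks ! j) \<in> V" using g kV that by auto
    have "lin_comb hs (coords V hs (g (ks ! j))) = (\<lambda>_. 0)"
      by (rule lin_comb_zero) (rule coords_in_zero[OF qh sV VU gv])
    then show ?thesis using cw[of "g (ks ! j)" "length hs + j"] gv VU that by (auto simp: nth_append)
  qed
  show ?thesis unfolding trace_wrt_def
    by (simp add: sum_lessThan_add_nat a b)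
qed

lemma quot_basis_transport:
  assumes sU: "subsp U" and sW: "subsp W" and sW': "subsp W'" and WU: "W \<subseteq> U"
    and qh: "quot_basis U W hs" and d: "linmap d" and dU: "d ` U = U'" and dW: "\<And>u. u \<in> U \<Longrightarrow> d u \<in> W' \<longleftrightarrow> u \<in> W"
  shows "quot_basis U' W' (map d hs)"
    and "\<And>u i. u \<in> U \<Longrightarrow> i < length hs \<Longrightarrow> coords W' (map d hs) (d u) i = coords W hs u i"
proof -
  have hU: "set hs \<subseteq> U" using qh unfolding quot_basis_def by auto
  have span: "(\<lambda>t. d u t - lin_comb (map d hs) (coords W hs u) t) \<in> W'" if u: "u \<in> U" for u
  proof -
    have r: "(\<lambda>t. u t - lin_comb hs (coords W hs u) t) \<in> W" using coords_spec[OF qh u] .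
    then have "d (\<lambda>t. u t - lin_comb hs (coords W hs u) t) \<in> W'" using dW WU by blast
    then show ?thesis by (simp add: linmap_diff[OF d] linmap_lin_comb[OF d])
  qed
  show qb: "quot_basis U' W' (map d hs)"
    unfolding quot_basis_def
  proof (intro conjI ballI allI impI)
    show "set (map d hs) \<subseteq> U'" using hU dU by auto
  next
    fix z assume "z \<in> U'" then obtain u where "u \<in> U" "z = d u" using dU by auto
    then show "\<exists>a. (\<lambda>t. z t - lin_comb (map d hs) a t) \<in> W'" using span by blast
  next
    fix a i assume a: "lin_comb (map d hs) a \<in> W'" and i: "i < length (map d hs)"
    have "lin_comb hs a \<in> U" using lin_comb_in[OF sU hU] .
    moreover have "d (lin_comb hs a) \<in> W'" using a by (simp add: linmap_lin_comb[OF d])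
    ultimately have "lin_comb hs a \<in> W" using dW by blast
    then show "a i = 0" using qh i unfolding quot_basis_def by auto
  qed
  show "coords W' (map d hs) (d u) i = coords W hs u i" if "u \<in> U" "i < length hs" for u i
    using coords_eq[OF qb sW' _ span[OF that(1)]] that dU by auto
qed

lemma trace_transport:
  assumes sU: "subsp U" and sW: "subsp W" and sW': "subsp W'" and WU: "W \<subseteq> U"
    and qh: "quot_basis U W hs" and d: "linmap d" and dU: "d ` U = U'" and dW: "\<And>u. u \<in> U \<Longrightarrow> d u \<in> W' \<longleftrightarrow> u \<in> W"
    and g: "g ` U \<subseteq> U" and comm: "\<And>u. u \<in> U \<Longrightarrow> g' (d u) = d (g u)"
  shows "trace_wrt W' (map d hs) g' = trace_wrt W hs g"
proof -
  note c = quot_basis_transport(2)[OF sU sW sW' WU qh d dU dW]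
  have hU: "hs ! i \<in> U" if "i < length hs" for i using qh that unfolding quot_basis_def by auto
  show ?thesis unfolding trace_wrt_def
    by (intro sum.cong refl) (use hU g c comm in auto)
qed

lemma quot_basis_exists:
  assumes "finite F" "subsp Z" "subsp B" "B \<subseteq> Z" "\<forall>z\<in>Z. \<forall>t. t \<notin> F \<longrightarrow> z t = 0"
  shows "\<exists>hs. quot_basis Z B hs"
  using assms
proof (induction F arbitrary: Z B rule: finite_induct)
  case empty
  then have "Z \<subseteq> {\<lambda>_. 0}" by (auto simp: fun_eq_iff)
  then have "quot_basis Z B []" using empty(2) subsp_0[of B] unfolding quot_basis_def lin_comb_def by auto
  then show ?case by blast
next
  case (insert x F Z B)
  define Z' where "Z' = {z \<in> Z. z x = 0}"
  define B' where "B' = {b \<in> B. b x = 0}"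
  have sZ': "subsp Z'" using insert.prems(1) unfolding Z'_def subsp_def by auto
  have sB': "subsp B'" using insert.prems(2) unfolding B'_def subsp_def by auto
  have "\<exists>hs. quot_basis Z' B' hs"
    by (rule insert.IH[OF sZ' sB']) (use insert.prems in \<open>auto simp: Z'_def B'_def\<close>)
  then obtain hs where qh: "quot_basis Z' B' hs" by blast
  have hsZ: "set hs \<subseteq> Z'" using qh unfolding quot_basis_def by auto
  have lx: "lin_comb hs a x = 0" for a
  proof -
    have "lin_comb hs a \<in> Z'" by (rule lin_comb_in[OF sZ' hsZ])
    then show ?thesis by (simp add: Z'_def)
  qed
  show ?case
  proof (cases "\<exists>b\<in>B. b x \<noteq> 0")
    case True
    then obtain b0 where b0: "b0 \<in> B" "b0 x \<noteq> 0" by blast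
    define b1 where "b1 = (\<lambda>t. (1 / b0 x) * b0 t)"
    have b1: "b1 \<in> B" "b1 x = 1" unfolding b1_def by (rule subsp_scale[OF insert.prems(2) b0(1)]) (use b0 in simp)
    have "quot_basis Z B hs" unfolding quot_basis_def
    proof (intro conjI ballI allI impI)
      show "set hs \<subseteq> Z" using hsZ Z'_def by auto
    next
      fix z assume z: "z \<in> Z"
      have zb: "(\<lambda>t. z t - z x * b1 t) \<in> Z'"
        using subsp_diff[OF insert.prems(1) z subsp_scale[OF insert.prems(1)]] b1 insert.prems(3) z
        by (auto simp: Z'_def)
      have ex: "\<exists>a. (\<lambda>t. z t - z x * b1 t - lin_comb hs a t) \<in> B'"
        using bspec[OF conjunct1[OF conjunct2[OF qh[unfolded quot_basis_def]]] zb] by simp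
      then obtain a where a: "(\<lambda>t. z t - z x * b1 t - lin_comb hs a t) \<in> B'" by blast
      have "(\<lambda>t. (\<lambda>t. z t - z x * b1 t - lin_comb hs a t) t + (\<lambda>t. z x * b1 t) t) \<in> B"
        using a b1 insert.prems(2) unfolding B'_def by (intro subsp_add subsp_scale) auto
      then have "(\<lambda>t. z t - lin_comb hs a t) \<in> B" by simp
      then show "\<exists>a. (\<lambda>t. z t - lin_comb hs a t) \<in> B" by blast
    next
      fix a i assume "lin_comb hs a \<in> B" "i < length hs"
      then have "lin_comb hs a \<in> B'" "i < length hs" using lx[of a] by (auto simp: B'_def)
      then show "a i = 0" using qh unfolding quot_basis_def by blast
    qed
    then show ?thesis by blast
  next
    case False
    show ?thesis
    proof (cases "\<exists>z\<in>Z. z x \<noteq> 0")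
      case False
      then have "Z = Z'" "B = B'" using insert.prems(3) \<open>\<not> (\<exists>b\<in>B. b x \<noteq> 0)\<close> unfolding Z'_def B'_def by blast+
      then show ?thesis using qh by blast
    next
      case True
      then obtain z0 where z0: "z0 \<in> Z" "z0 x \<noteq> 0" by blast
      define z1 where "z1 = (\<lambda>t. (1 / z0 x) * z0 t)"
      have z1: "z1 \<in> Z" "z1 x = 1" unfolding z1_def by (rule subsp_scale[OF insert.prems(1) z0(1)]) (use z0 in simp)
      have BB: "B = B'" using \<open>\<not> (\<exists>b\<in>B. b x \<noteq> 0)\<close> unfolding B'_def by blast
      have lc: "lin_comb (z1 # hs) a = (\<lambda>t. a 0 * z1 t + lin_comb hs (\<lambda>i. a (Suc i)) t)" for a
        unfolding lin_comb_def length_Cons sum.lessThan_Suc_shift by simp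
      have "quot_basis Z B (z1 # hs)" unfolding quot_basis_def
      proof (intro conjI ballI allI impI)
        show "set (z1 # hs) \<subseteq> Z" using hsZ Z'_def z1 by auto
      next
        fix z assume z: "z \<in> Z"
        have zb: "(\<lambda>t. z t - z x * z1 t) \<in> Z'"
          using subsp_diff[OF insert.prems(1) z subsp_scale[OF insert.prems(1) z1(1)]] z1
          by (auto simp: Z'_def)
        have ex: "\<exists>a. (\<lambda>t. z t - z x * z1 t - lin_comb hs a t) \<in> B'"
          using bspec[OF conjunct1[OF conjunct2[OF qh[unfolded quot_basis_def]]] zb] by simp
        then obtain a where a: "(\<lambda>t. z t - z x * z1 t - lin_comb hs a t) \<in> B'" by blast
        have e1: "lin_comb (z1 # hs) (\<lambda>i. if i = 0 then z x else a (i - 1)) = (\<lambda>t. z x * z1 t + lin_comb hs a t)"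
          unfolding lc by simp
        have "(\<lambda>t. z t - lin_comb (z1 # hs) (\<lambda>i. if i = 0 then z x else a (i - 1)) t) = (\<lambda>t. z t - z x * z1 t - lin_comb hs a t)"
          unfolding e1 by (simp add: algebra_simps)
        then have "(\<lambda>t. z t - lin_comb (z1 # hs) (\<lambda>i. if i = 0 then z x else a (i - 1)) t) \<in> B"
          using a BB by simp
        then show "\<exists>a. (\<lambda>t. z t - lin_comb (z1 # hs) a t) \<in> B" by blast
      next
        fix a i assume a: "lin_comb (z1 # hs) a \<in> B" and i: "i < length (z1 # hs)"
        have aB': "lin_comb (z1 # hs) a \<in> B'" using a BB by simp
        then have "lin_comb (z1 # hs) a x = 0" unfolding B'_def by blast
        moreover have "lin_comb (z1 # hs) a x = a 0" using lc[of a] lx[of "\<lambda>i. a (Suc i)"] z1(2) by simp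
        ultimately have a0: "a 0 = 0" by simp
        have "lin_comb (z1 # hs) a = lin_comb hs (\<lambda>i. a (Suc i))" using lc[of a] a0 by simp
        with aB' have "lin_comb hs (\<lambda>i. a (Suc i)) \<in> B'" by simp
        then have rest: "\<forall>i<length hs. a (Suc i) = 0" using qh unfolding quot_basis_def by blast
        show "a i = 0"
        proof (cases i)
          case 0 with a0 show ?thesis by simp
        next
          case (Suc k) with rest i show ?thesis by simp
        qed
      qed
      then show ?thesis by blast
    qed
  qed
qed

lemma permute_list_by_eq: "permute_list_by p s = permute_list p s"
  unfolding permute_list_by_def permute_list_def ..

lemma permute_list_inv_cancel:
  assumes "p permutes {..<length s}"
  shows "permute_list (inv p) (permute_list p s) = s"
proof -
  have "permute_list (inv p) (permute_list p s) = permute_list (p \<circ> inv p) s"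
    using permute_list_compose[OF permutes_inv[OF assms], of p] by simp
  also have "p \<circ> inv p = id" using permutes_inv_o(1)[OF assms] .
  finally show ?thesis by simp
qed

lemma permute_list_inj:
  assumes "p permutes {..<n}" "length s = n" "length s' = n" "permute_list p s = permute_list p s'"
  shows "s = s'"
  using permute_list_inv_cancel[of p s] permute_list_inv_cancel[of p s'] assms by metis

lemma perm_unique:
  assumes "distinct u" "p permutes {..<length u}" "p' permutes {..<length u}"
    "permute_list p u = permute_list p' u"
  shows "p = p'"
proof
  fix i show "p i = p' i"
  proof (cases "i < length u")
    case True
    have "u ! p i = u ! p' i" using arg_cong[OF assms(4), of "\<lambda>l. l ! i"] True
      by (simp add: permute_list_nth[OF assms(2)] permute_list_nth[OF assms(3)])
    moreover have "p i < length u" using permutes_in_image[OF assms(2)] True by simp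
    moreover have "p' i < length u" using permutes_in_image[OF assms(3)] True by simp
    ultimately show ?thesis using assms(1) nth_eq_iff_index_eq by blast
  next
    case False then show ?thesis using assms(2,3) by (simp add: permutes_not_in)
  qed
qed

lemma gen_eq:
  assumes "distinct u" "r permutes {..<length u}" "t = permute_list r u"
  shows "gen u t = of_int (sign r)"
proof -
  have ex: "\<exists>p. p permutes {..<length u} \<and> t = permute_list_by p u"
    using assms by (auto simp: permute_list_by_eq)
  have "(SOME p. p permutes {..<length u} \<and> t = permute_list_by p u) = r"
  proof (rule some_equality)
    show "r permutes {..<length u} \<and> t = permute_list_by r u" using assms by (simp add: permute_list_by_eq)
  next
    fix p assume p: "p permutes {..<length u} \<and> t = permute_list_by p u"
    then have "permute_list p u = permute_list r u" using assms(3) by (simp add: permute_list_by_eq)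
    then show "p = r" using perm_unique[OF assms(1), of p r] p assms(2) by blast
  qed
  then show ?thesis using ex unfolding gen_def by simp
qed

lemma gen_zero:
  assumes "\<not> (\<exists>p. p permutes {..<length u} \<and> t = permute_list p u)"
  shows "gen u t = 0"
  using assms unfolding gen_def by (simp add: permute_list_by_eq)

lemma gen_nz_set:
  assumes "gen u t \<noteq> 0" shows "set t = set u"
proof -
  obtain p where "p permutes {..<length u}" "t = permute_list p u" using gen_zero[of u t] assms by blast
  then show ?thesis by simp
qed

lemma gen_self: "distinct u \<Longrightarrow> gen u u = 1"
  using gen_eq[of u id u] by (simp add: permutes_id)

lemma gen_sum:
  assumes "distinct u"
  shows "gen u t = (\<Sum>p\<in>{p. p permutes {..<length u}}. if t = permute_list p u then of_int (sign p) else 0)"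
proof (cases "\<exists>p. p permutes {..<length u} \<and> t = permute_list p u")
  case True
  then obtain r where r: "r permutes {..<length u}" "t = permute_list r u" by blast
  have "(\<Sum>p\<in>{p. p permutes {..<length u}}. if t = permute_list p u then of_int (sign p) else 0)
      = (\<Sum>p\<in>{p. p permutes {..<length u}}. if p = r then of_int (sign p) else (0::rat))"
    by (rule sum.cong) (use perm_unique[OF assms] r in auto)
  also have "\<dots> = of_int (sign r)" using r by (simp add: finite_permutations)
  finally show ?thesis using gen_eq[OF assms r] by simp
next
  case False
  have "(\<Sum>p\<in>{p. p permutes {..<length u}}. if t = permute_list p u then of_int (sign p) else (0::rat)) = 0"
    by (rule sum.neutral) (use False in auto)
  then show ?thesis using gen_zero[OF False] by simp
qed

lemma pl_nth: "i < length xs \<Longrightarrow> permute_list g xs ! i = xs ! g i"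
  unfolding permute_list_def by (simp del: upt_Suc)

lemma distinct_permute_list': "p permutes {..<length xs} \<Longrightarrow> distinct (permute_list p xs) = distinct xs"
  by (rule distinct_permute_list)

lemma permute_list_transpose_same:
  assumes "a < length xs" "b < length xs" "xs ! a = xs ! b"
  shows "permute_list (Transposition.transpose a b) xs = xs"
proof (rule nth_equalityI)
  show "length (permute_list (Transposition.transpose a b) xs) = length xs" by simp
  fix i assume "i < length (permute_list (Transposition.transpose a b) xs)"
  then have i: "i < length xs" by simp
  have "permute_list (Transposition.transpose a b) xs ! i = xs ! (Transposition.transpose a b i)"
    unfolding permute_list_def using i by simp
  also have "\<dots> = xs ! i" using assms by (auto simp: Transposition.transpose_def)
  finally show "permute_list (Transposition.transpose a b) xs ! i = xs ! i" .
qed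

definition shiftp :: "(nat \<Rightarrow> nat) \<Rightarrow> nat \<Rightarrow> nat" where
  "shiftp p j = (if j = 0 then 0 else Suc (p (j - 1)))"

lemma shiftp_map_permutation:
  assumes "p permutes {..<n}"
  shows "shiftp p = map_permutation {..<n} Suc p"
proof
  fix j
  show "shiftp p j = map_permutation {..<n} Suc p j"
  proof (cases "j \<in> Suc ` {..<n}")
    case True
    then obtain k where k: "k < n" "j = Suc k" by auto
    have "inv_into {..<n} Suc j = k" using k by (simp add: inv_into_f_eq)
    then show ?thesis using k unfolding map_permutation_def restrict_id_def shiftp_def by simp
  next
    case False
    then have "j = 0 \<or> j > n" by (cases j) auto
    then show ?thesis using False assms unfolding map_permutation_def restrict_id_def shiftp_def
      by (auto simp: permutes_not_in)
  qed
qed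

lemma shiftp_permutes:
  assumes "p permutes {..<n}"
  shows "shiftp p permutes {..<Suc n}"
proof -
  have "bij_betw Suc {..<n} {1..<Suc n}" by (simp add: bij_betw_Suc atLeast0LessThan[symmetric] lessThan_atLeast0)
  then have "map_permutation {..<n} Suc p permutes {1..<Suc n}" using map_permutation_permutes assms by blast
  then have "map_permutation {..<n} Suc p permutes {..<Suc n}" by (rule permutes_subset) auto
  then show ?thesis using shiftp_map_permutation[OF assms] by simp
qed

lemma sign_shiftp:
  assumes "p permutes {..<n}"
  shows "sign (shiftp p) = sign p"
  using sign_map_permutation[of Suc "{..<n}" p] assms shiftp_map_permutation[OF assms] by simp

lemma permute_list_shiftp:
  assumes "p permutes {..<length u}"
  shows "permute_list (shiftp p) (x # u) = x # permute_list p u"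
proof (rule nth_equalityI)
  show "length (permute_list (shiftp p) (x # u)) = length (x # permute_list p u)" by simp
  fix i assume "i < length (permute_list (shiftp p) (x # u))"
  then have i: "i < Suc (length u)" by simp
  show "permute_list (shiftp p) (x # u) ! i = (x # permute_list p u) ! i"
  proof (cases i)
    case 0 then show ?thesis using pl_nth[of 0 "x # u" "shiftp p"] by (simp add: shiftp_def)
  next
    case (Suc k)
    then have k: "k < length u" using i by simp
    have "permute_list (shiftp p) (x # u) ! i = (x # u) ! shiftp p i" using pl_nth[of i "x # u"] i by simp
    also have "\<dots> = u ! p k" using Suc by (simp add: shiftp_def)
    also have "\<dots> = permute_list p u ! k" using k by (simp add: permute_list_nth[OF assms])
    finally show ?thesis using Suc by simp
  qed
qed

primrec rho :: "nat \<Rightarrow> nat \<Rightarrow> nat" where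
  "rho 0 = id"
| "rho (Suc i) = rho i \<circ> Transposition.transpose 0 (Suc i)"

lemma rho_permutes: "i < n \<Longrightarrow> rho i permutes {..<n}"
proof (induction i)
  case 0 show ?case unfolding rho.simps(1) by (rule permutes_id)
next
  case (Suc i)
  have "Transposition.transpose 0 (Suc i) permutes {..<n}" using Suc.prems by (intro permutes_swap_id) auto
  moreover have "rho i permutes {..<n}" using Suc by simp
  ultimately show ?case unfolding rho.simps(2) by (rule permutes_compose)
qed

lemma sign_rho: "sign (rho i) = (-1) ^ i"
proof (induction i)
  case 0 then show ?case by simp
next
  case (Suc i)
  have p1: "permutation (rho i)" using rho_permutes[of i "Suc i"] permutes_imp_permutation by blast
  have "sign (rho (Suc i)) = sign (rho i) * sign (Transposition.transpose (0::nat) (Suc i))"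
    unfolding rho.simps(2) by (rule sign_compose[OF p1 permutation_swap_id])
  then show ?case using Suc.IH by (simp add: sign_swap_id del: rho.simps)
qed

lemma rho_val: "rho i j = (if j = 0 then i else if j \<le> i then j - 1 else j)"
proof (induction i arbitrary: j)
  case 0 then show ?case by simp
next
  case (Suc i)
  show ?case using Suc by (auto simp: Transposition.transpose_def)
qed

lemma del_nth_nth:
  assumes "i < length s" "m < length s - 1"
  shows "del_nth i s ! m = (if m < i then s ! m else s ! Suc m)"
  using assms unfolding del_nth_def by (auto simp: nth_append min_def)

lemma length_del_nth: "i < length s \<Longrightarrow> length (del_nth i s) = length s - 1"
  unfolding del_nth_def by auto

lemma permute_rho:
  assumes "i < length s"
  shows "permute_list (rho i) s = s ! i # del_nth i s"
proof (rule nth_equalityI)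
  show "length (permute_list (rho i) s) = length (s ! i # del_nth i s)" using assms by (simp add: length_del_nth)
  fix k assume "k < length (permute_list (rho i) s)"
  then have k: "k < length s" by simp
  have "permute_list (rho i) s ! k = s ! rho i k" unfolding permute_list_def using k by simp
  also have "\<dots> = (s ! i # del_nth i s) ! k"
    using assms k by (cases k) (auto simp: rho_val del_nth_nth)
  finally show "permute_list (rho i) s ! k = (s ! i # del_nth i s) ! k" .
qed

lemma permute_list_inv_cancel2:
  assumes "p permutes {..<length s}"
  shows "permute_list p (permute_list (inv p) s) = s"
proof -
  have "permute_list p (permute_list (inv p) s) = permute_list (inv p \<circ> p) s"
    using permute_list_compose[OF assms, of "inv p"] by simp
  also have "inv p \<circ> p = id" using permutes_inv_o(2)[OF assms] .
  finally show ?thesis by simp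
qed

lemma aux_cancel: "(a::rat) \<noteq> 0 \<Longrightarrow> 1 / a * (a * S) = S" by simp

lemma aux_swap: "(\<Sum>s\<in>S. c s / (F::rat) * (\<Sum>i<n. g i s)) = (1 / F) * (\<Sum>i<n. \<Sum>s\<in>S. c s * g i s)"
  by (simp add: sum_distrib_left sum.swap[of _ "{..<n}"] mult_ac)

locale fimg =
  fixes X :: "'a set" and adj :: "'a \<Rightarrow> 'a \<Rightarrow> bool" and f :: "'a \<Rightarrow> 'a"
  assumes finX: "finite X" and cont: "dcontinuous X adj f"
begin

abbreviation "OS q \<equiv> {s. osimplex X adj q s}"

lemma finite_OS: "finite (OS q)"
proof (rule finite_subset)
  show "OS q \<subseteq> {xs. set xs \<subseteq> X \<and> length xs = Suc q}" unfolding osimplex_def by auto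
  show "finite {xs. set xs \<subseteq> X \<and> length xs = Suc q}" using finite_lists_length_eq[OF finX] .
qed

lemma OS_permute:
  assumes "p permutes {..<Suc q}" "osimplex X adj q s"
  shows "osimplex X adj q (permute_list p s)"
proof -
  have l: "length s = Suc q" using assms(2) unfolding osimplex_def by simp
  then have p: "p permutes {..<length s}" using assms(1) by simp
  show ?thesis using assms(2) l distinct_permute_list[OF p] set_permute_list[OF p]
    unfolding osimplex_def by simp
qed

lemma OS_permute_iff:
  assumes "p permutes {..<Suc q}" "length s = Suc q"
  shows "osimplex X adj q (permute_list p s) \<longleftrightarrow> osimplex X adj q s"
proof
  assume "osimplex X adj q (permute_list p s)"
  from OS_permute[OF permutes_inv[OF assms(1)] this] show "osimplex X adj q s"
    using permute_list_inv_cancel[of p s] assms by simp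
qed (rule OS_permute[OF assms(1)])

lemma bij_OS:
  assumes "p permutes {..<Suc q}"
  shows "bij_betw (permute_list p) (OS q) (OS q)"
proof (rule bij_betw_byWitness[where f'="permute_list (inv p)"])
  show "\<forall>a\<in>OS q. permute_list (inv p) (permute_list p a) = a"
  proof
    fix a assume "a \<in> OS q" then have "length a = Suc q" unfolding osimplex_def by simp
    then show "permute_list (inv p) (permute_list p a) = a" using permute_list_inv_cancel[of p a] assms by simp
  qed
  show "\<forall>a\<in>OS q. permute_list p (permute_list (inv p) a) = a"
  proof
    fix a assume "a \<in> OS q" then have "length a = Suc q" unfolding osimplex_def by simp
    then show "permute_list p (permute_list (inv p) a) = a" using permute_list_inv_cancel2[of p a] assms by simp
  qed
  show "permute_list p ` OS q \<subseteq> OS q" using OS_permute[OF assms] by auto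
  show "permute_list (inv p) ` OS q \<subseteq> OS q" using OS_permute[OF permutes_inv[OF assms]] by auto
qed

lemma chain_zero: "c \<in> chains X adj q \<Longrightarrow> \<not> osimplex X adj q s \<Longrightarrow> c s = 0"
  unfolding chains_def by auto

lemma chain_alt:
  assumes c: "c \<in> chains X adj q" and l: "length s = Suc q" and p: "p permutes {..<Suc q}"
  shows "c (permute_list p s) = of_int (sign p) * c s"
proof (cases "osimplex X adj q s")
  case True then show ?thesis using c p unfolding chains_def by (simp add: permute_list_by_eq)
next
  case False
  then have "\<not> osimplex X adj q (permute_list p s)" using OS_permute_iff[OF p l] by simp
  then show ?thesis using False chain_zero[OF c] by simp
qed

lemma sgn_sq: "(of_int (sign p) :: rat) * of_int (sign p) = 1"
  by (metis of_int_mult of_int_1 sign_idempotent)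

lemma chain_alt':
  assumes c: "c \<in> chains X adj q" and l: "length s = Suc q" and p: "p permutes {..<Suc q}"
  shows "c s = of_int (sign p) * c (permute_list p s)"
proof -
  have "of_int (sign p) * c (permute_list p s) = (of_int (sign p) * of_int (sign p)) * c s" using chain_alt[OF assms] by simp
  then show ?thesis by (simp only: sgn_sq mult_1)
qed

lemma subsp_chains: "subsp (chains X adj q)"
  unfolding subsp_def chains_def by (auto simp: algebra_simps)

lemma linmap_bdry: "linmap (bdry X adj q)"
  unfolding linmap_def bdry_def by (auto simp: fun_eq_iff sum.distrib sum_distrib_left add_divide_distrib distrib_right mult.assoc)

lemma linmap_chain_map: "linmap (chain_map X adj f q)"
  unfolding linmap_def chain_map_def by (auto simp: fun_eq_iff sum.distrib sum_distrib_left add_divide_distrib distrib_right mult.assoc)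

lemma card_P: "card {p. p permutes {..<n}} = fact n"
  using card_permutations[of "{..<n}" n] by simp

lemma cm_formula:
  assumes c: "c \<in> chains X adj q"
  shows "chain_map X adj f q c t = (if distinct t then (\<Sum>s\<in>{s\<in>OS q. map f s = t}. c s) else 0)"
proof (cases "distinct t")
  case False
  have "(if distinct (map f s) then gen (map f s) t else 0) = 0" for s
  proof (cases "distinct (map f s)")
    case True
    have "\<not> (\<exists>p. p permutes {..<length (map f s)} \<and> t = permute_list p (map f s))"
      using False True distinct_permute_list by blast
    then have "gen (map f s) t = 0" by (rule gen_zero)
    with True show ?thesis by simp
  qed simp
  then show ?thesis using False unfolding chain_map_def by simp
next
  case True
  let ?P = "{p. p permutes {..<Suc q}}"
  have K: "(if distinct (map f s) then gen (map f s) t else 0) =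
      (\<Sum>p\<in>?P. if t = permute_list p (map f s) then of_int (sign p) else 0)" if s: "s \<in> OS q" for s
  proof (cases "distinct (map f s)")
    case True
    have "length (map f s) = Suc q" using s unfolding osimplex_def by simp
    then show ?thesis using gen_sum[OF True, of t] True by simp
  next
    case False
    have "length (map f s) = Suc q" using s unfolding osimplex_def by simp
    then have "(\<Sum>p\<in>?P. if t = permute_list p (map f s) then of_int (sign p) else (0::rat)) = 0"
      using False \<open>distinct t\<close> by (intro sum.neutral) auto
    then show ?thesis using False by simp
  qed
  have inner: "(\<Sum>s\<in>OS q. c s * (if t = permute_list p (map f s) then of_int (sign p) else 0)) =
      (\<Sum>s\<in>OS q. if map f s = t then c s else 0)" if p: "p \<in> ?P" for p
  proof -
    have "(\<Sum>s\<in>OS q. c s * (if t = permute_list p (map f s) then of_int (sign p) else 0)) =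
        (\<Sum>s\<in>OS q. (\<lambda>s. if map f s = t then c s else 0) (permute_list p s))"
    proof (rule sum.cong[OF refl])
      fix s assume s: "s \<in> OS q"
      have l: "length s = Suc q" using s unfolding osimplex_def by simp
      have pp: "p permutes {..<length s}" using p l by simp
      have e: "permute_list p (map f s) = map f (permute_list p s)" using permute_list_map[OF pp] .
      have "c (permute_list p s) = of_int (sign p) * c s" using chain_alt[OF c l] p by simp
      then have "c s * of_int (sign p) = c (permute_list p s)"
        using sgn_sq[of p] by (metis mult.commute mult.left_commute mult_1)
      then show "c s * (if t = permute_list p (map f s) then of_int (sign p) else 0) =
          (\<lambda>s. if map f s = t then c s else 0) (permute_list p s)" using e by auto
    qed
    also have "\<dots> = (\<Sum>s\<in>OS q. if map f s = t then c s else 0)"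
      using sum.reindex_bij_betw[OF bij_OS[of p q], of "\<lambda>s. if map f s = t then c s else 0"] p by simp
    finally show ?thesis .
  qed
  have "chain_map X adj f q c t = (\<Sum>s\<in>OS q. c s / of_nat (fact (Suc q)) *
      (\<Sum>p\<in>?P. if t = permute_list p (map f s) then of_int (sign p) else 0))"
    unfolding chain_map_def by (intro sum.cong refl) (simp add: K)
  also have "\<dots> = (1 / of_nat (fact (Suc q))) * (\<Sum>p\<in>?P. \<Sum>s\<in>OS q. c s * (if t = permute_list p (map f s) then of_int (sign p) else 0))"
    by (simp add: sum_distrib_left sum_distrib_right sum.swap[of _ ?P] mult_ac)
  also have "\<dots> = (1 / of_nat (fact (Suc q))) * (\<Sum>p\<in>?P. \<Sum>s\<in>OS q. if map f s = t then c s else 0)"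
    using inner by simp
  also have "\<dots> = (1 / of_nat (fact (Suc q))) * (of_nat (fact (Suc q)) * (\<Sum>s\<in>OS q. if map f s = t then c s else 0))"
    by (simp only: sum_constant card_P)
  also have "\<dots> = (\<Sum>s\<in>OS q. if map f s = t then c s else 0)"
    by (rule aux_cancel) (simp only: of_nat_fact fact_nonzero not_False_eq_True)
  also have "\<dots> = (\<Sum>s\<in>{s\<in>OS q. map f s = t}. c s)"
    by (simp only: sum.inter_filter[OF finite_OS])
  finally show ?thesis using True by simp
qed

lemma tl_sum:
  assumes c: "c \<in> chains X adj (Suc r)"
  shows "(\<Sum>s\<in>{s\<in>OS (Suc r). tl s = t}. c s) = (\<Sum>x\<in>X. c (x # t))"
proof -
  have img: "{s\<in>OS (Suc r). tl s = t} = (\<lambda>x. x # t) ` {x\<in>X. osimplex X adj (Suc r) (x # t)}"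
  proof
    show "{s\<in>OS (Suc r). tl s = t} \<subseteq> (\<lambda>x. x # t) ` {x\<in>X. osimplex X adj (Suc r) (x # t)}"
    proof
      fix s assume s: "s \<in> {s\<in>OS (Suc r). tl s = t}"
      then have "s \<noteq> []" unfolding osimplex_def by auto
      then have "s = hd s # t" using s by (metis (mono_tags, lifting) list.collapse mem_Collect_eq)
      moreover have "hd s \<in> X" using s \<open>s \<noteq> []\<close> unfolding osimplex_def by auto
      ultimately show "s \<in> (\<lambda>x. x # t) ` {x\<in>X. osimplex X adj (Suc r) (x # t)}" using s by (auto intro!: image_eqI[of _ _ "hd s"])
    qed
  qed auto
  have "(\<Sum>s\<in>{s\<in>OS (Suc r). tl s = t}. c s) = (\<Sum>x\<in>{x\<in>X. osimplex X adj (Suc r) (x # t)}. c (x # t))"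
    unfolding img by (subst sum.reindex) (auto simp: inj_on_def)
  also have "\<dots> = (\<Sum>x\<in>X. c (x # t))"
    by (rule sum.mono_neutral_left) (use finX chain_zero[OF c] in auto)
  finally show ?thesis .
qed

lemma bdry_formula:
  assumes c: "c \<in> chains X adj (Suc r)"
  shows "bdry X adj (Suc r) c t = (\<Sum>x\<in>X. c (x # t))"
proof -
  let ?P = "{p. p permutes {..<Suc r}}"
  define n where "n = Suc (Suc r)"
  have stepa: "(\<Sum>s\<in>OS (Suc r). c s * ((-1) ^ i * gen (del_nth i s) t)) = (\<Sum>s\<in>OS (Suc r). c s * gen (tl s) t)"
    if i: "i < n" for i
  proof -
    have rp: "rho i permutes {..<Suc (Suc r)}" using rho_permutes i n_def by simp
    have "(\<Sum>s\<in>OS (Suc r). c s * ((-1) ^ i * gen (del_nth i s) t)) =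
        (\<Sum>s\<in>OS (Suc r). (\<lambda>s. c s * gen (tl s) t) (permute_list (rho i) s))"
    proof (rule sum.cong[OF refl])
      fix s assume s: "s \<in> OS (Suc r)"
      have l: "length s = Suc (Suc r)" using s unfolding osimplex_def by simp
      have "c (permute_list (rho i) s) = (-1) ^ i * c s" using chain_alt[OF c l rp] sign_rho by simp
      moreover have "tl (permute_list (rho i) s) = del_nth i s" using permute_rho[of i s] i l n_def by simp
      ultimately show "c s * ((-1) ^ i * gen (del_nth i s) t) = (\<lambda>s. c s * gen (tl s) t) (permute_list (rho i) s)"
        by simp
    qed
    also have "\<dots> = (\<Sum>s\<in>OS (Suc r). c s * gen (tl s) t)" using sum.reindex_bij_betw[OF bij_OS[OF rp], of "\<lambda>s. c s * gen (tl s) t"] by simp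
    finally show ?thesis .
  qed
  have stepb: "(\<Sum>s\<in>OS (Suc r). c s * gen (tl s) t) = of_nat (fact (Suc r)) * (\<Sum>x\<in>X. c (x # t))"
  proof -
    have G: "gen (tl s) t = (\<Sum>p\<in>?P. if t = permute_list p (tl s) then of_int (sign p) else 0)" if s: "s \<in> OS (Suc r)" for s
    proof -
      have "distinct (tl s)" "length (tl s) = Suc r" using s unfolding osimplex_def by (auto simp: distinct_tl)
      then show ?thesis using gen_sum[of "tl s" t] by simp
    qed
    have inner: "(\<Sum>s\<in>OS (Suc r). c s * (if t = permute_list p (tl s) then of_int (sign p) else 0)) =
        (\<Sum>s\<in>OS (Suc r). if tl s = t then c s else 0)" if p: "p \<in> ?P" for p
    proof -
      have sp: "shiftp p permutes {..<Suc (Suc r)}" using shiftp_permutes p by simp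
      have "(\<Sum>s\<in>OS (Suc r). c s * (if t = permute_list p (tl s) then of_int (sign p) else 0)) =
          (\<Sum>s\<in>OS (Suc r). (\<lambda>s. if tl s = t then c s else 0) (permute_list (shiftp p) s))"
      proof (rule sum.cong[OF refl])
        fix s assume s: "s \<in> OS (Suc r)"
        have l: "length s = Suc (Suc r)" using s unfolding osimplex_def by simp
        then obtain x u where xu: "s = x # u" by (cases s) auto
        have pu: "p permutes {..<length u}" using p l xu by simp
        have e: "tl (permute_list (shiftp p) s) = permute_list p (tl s)" using permute_list_shiftp[OF pu, of x] xu by simp
        have "c (permute_list (shiftp p) s) = of_int (sign p) * c s"
          using chain_alt[OF c l sp] sign_shiftp p by simp
        then have "c s * of_int (sign p) = c (permute_list (shiftp p) s)"
          using sgn_sq[of p] by (metis mult.commute mult.left_commute mult_1)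
        then show "c s * (if t = permute_list p (tl s) then of_int (sign p) else 0) =
            (\<lambda>s. if tl s = t then c s else 0) (permute_list (shiftp p) s)" using e by auto
      qed
      also have "\<dots> = (\<Sum>s\<in>OS (Suc r). if tl s = t then c s else 0)"
        using sum.reindex_bij_betw[OF bij_OS[OF sp], of "\<lambda>s. if tl s = t then c s else 0"] by simp
      finally show ?thesis .
    qed
    have "(\<Sum>s\<in>OS (Suc r). c s * gen (tl s) t) =
        (\<Sum>s\<in>OS (Suc r). \<Sum>p\<in>?P. c s * (if t = permute_list p (tl s) then of_int (sign p) else 0))"
      by (intro sum.cong refl) (simp add: G sum_distrib_left)
    also have "\<dots> = (\<Sum>p\<in>?P. \<Sum>s\<in>OS (Suc r). c s * (if t = permute_list p (tl s) then of_int (sign p) else 0))"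
      by (rule sum.swap)
    also have "\<dots> = (\<Sum>p\<in>?P. \<Sum>s\<in>OS (Suc r). if tl s = t then c s else 0)"
      using inner by simp
    also have "\<dots> = of_nat (fact (Suc r)) * (\<Sum>s\<in>{s\<in>OS (Suc r). tl s = t}. c s)"
      by (simp only: sum_constant card_P sum.inter_filter[OF finite_OS])
    finally show ?thesis using tl_sum[OF c] by simp
  qed
  have "bdry X adj (Suc r) c t = (1 / of_nat (fact n)) * (\<Sum>i<n. \<Sum>s\<in>OS (Suc r). c s * ((-1) ^ i * gen (del_nth i s) t))"
    unfolding bdry_def n_def[symmetric] by (rule aux_swap)
  also have "\<dots> = (1 / of_nat (fact n)) * (\<Sum>i<n. of_nat (fact (Suc r)) * (\<Sum>x\<in>X. c (x # t)))"
    using stepa stepb by simp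
  also have "\<dots> = (1 / of_nat (fact n)) * (of_nat (fact n) * (\<Sum>x\<in>X. c (x # t)))"
  proof -
    have fn: "fact n = n * fact (Suc r)" unfolding n_def by simp
    show ?thesis by (simp only: sum_constant card_lessThan fn of_nat_mult mult.assoc)
  qed
  also have "\<dots> = (\<Sum>x\<in>X. c (x # t))"
    by (rule aux_cancel) (simp only: of_nat_fact fact_nonzero not_False_eq_True)
  finally show ?thesis .
qed

end

lemma permute_swap01: "permute_list (Transposition.transpose 0 1) (x # y # t) = y # x # t"
proof (rule nth_equalityI)
  show "length (permute_list (Transposition.transpose 0 1) (x # y # t)) = length (y # x # t)" by simp
  fix i assume "i < length (permute_list (Transposition.transpose 0 1) (x # y # t))"
  then have i: "i < length (x # y # t)" by simp
  show "permute_list (Transposition.transpose 0 1) (x # y # t) ! i = (y # x # t) ! i"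
    using pl_nth[OF i] by (cases i; cases "i - 1") (auto simp: Transposition.transpose_def)
qed

context fimg
begin

lemma fX: "x \<in> X \<Longrightarrow> f x \<in> X" using cont unfolding dcontinuous_def by auto

lemma map_os:
  assumes s: "osimplex X adj q s" and d: "distinct (map f s)"
  shows "osimplex X adj q (map f s)"
  unfolding osimplex_def
proof (intro conjI ballI impI)
  show "length (map f s) = Suc q" using s unfolding osimplex_def by simp
  show "distinct (map f s)" by (rule d)
  show "set (map f s) \<subseteq> X" using s fX unfolding osimplex_def by auto
  fix x y assume x: "x \<in> set (map f s)" and y: "y \<in> set (map f s)" and xy: "x \<noteq> y"
  then obtain a b where ab: "a \<in> set s" "b \<in> set s" "x = f a" "y = f b" by auto
  then have "a \<noteq> b" using xy by auto
  then have "adj a b" using s ab unfolding osimplex_def by auto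
  moreover have "a \<in> X" "b \<in> X" using s ab unfolding osimplex_def by auto
  ultimately have "f a = f b \<or> adj (f a) (f b)" using cont unfolding dcontinuous_def by blast
  then show "adj x y" using ab xy by auto
qed

lemma os_tl: "osimplex X adj (Suc r) (x # t) \<Longrightarrow> osimplex X adj r t"
  unfolding osimplex_def by auto

lemma cm_formula':
  assumes c: "c \<in> chains X adj q" and d: "distinct t"
  shows "chain_map X adj f q c t = (\<Sum>s\<in>OS q. if map f s = t then c s else 0)"
  using cm_formula[OF c] d by (simp only: sum.inter_filter[OF finite_OS] if_True)

lemma chain_map_in:
  assumes c: "c \<in> chains X adj q"
  shows "chain_map X adj f q c \<in> chains X adj q"
  unfolding chains_def
proof (intro CollectI conjI allI impI)
  fix t assume t: "\<not> osimplex X adj q t"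
  show "chain_map X adj f q c t = 0"
  proof (cases "distinct t")
    case False then show ?thesis using cm_formula[OF c] by simp
  next
    case True
    have e: "{s. osimplex X adj q s \<and> map f s = t} = {}" using map_os t True by auto
    show ?thesis using cm_formula[OF c, of t] True by (simp add: e)
  qed
next
  fix t p assume t: "osimplex X adj q t" and p: "p permutes {..<Suc q}"
  have lt: "length t = Suc q" using t unfolding osimplex_def by simp
  have pt: "p permutes {..<length t}" using p lt by simp
  have dt: "distinct t" using t unfolding osimplex_def by simp
  have dpt: "distinct (permute_list p t)" using dt distinct_permute_list[OF pt] by simp
  have "chain_map X adj f q c (permute_list p t) = (\<Sum>s\<in>OS q. if map f s = permute_list p t then c s else 0)"
    by (rule cm_formula'[OF c dpt])
  also have "\<dots> = (\<Sum>s\<in>OS q. (\<lambda>s. if map f s = permute_list p t then c s else 0) (permute_list p s))"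
    using sum.reindex_bij_betw[OF bij_OS[OF p], of "\<lambda>s. if map f s = permute_list p t then c s else 0"] by simp
  also have "\<dots> = (\<Sum>s\<in>OS q. of_int (sign p) * (if map f s = t then c s else 0))"
  proof (rule sum.cong[OF refl])
    fix s assume s: "s \<in> OS q"
    have ls: "length s = Suc q" using s unfolding osimplex_def by simp
    have ps: "p permutes {..<length s}" using p ls by simp
    have "map f (permute_list p s) = permute_list p (map f s)" by (rule permute_list_map[OF ps, symmetric])
    moreover have "permute_list p (map f s) = permute_list p t \<longleftrightarrow> map f s = t"
      using permute_list_inj[OF p, of "map f s" t] ls lt by auto
    moreover have "c (permute_list p s) = of_int (sign p) * c s" using chain_alt[OF c ls p] .
    ultimately show "(\<lambda>s. if map f s = permute_list p t then c s else 0) (permute_list p s) =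
        of_int (sign p) * (if map f s = t then c s else 0)" by simp
  qed
  also have "\<dots> = of_int (sign p) * chain_map X adj f q c t"
    using cm_formula'[OF c dt] by (simp add: sum_distrib_left)
  finally show "chain_map X adj f q c (permute_list_by p t) = of_int (sign p) * chain_map X adj f q c t"
    by (simp add: permute_list_by_eq)
qed

lemma bdry_in:
  assumes c: "c \<in> chains X adj (Suc r)"
  shows "bdry X adj (Suc r) c \<in> chains X adj r"
  unfolding chains_def
proof (intro CollectI conjI allI impI)
  fix t assume t: "\<not> osimplex X adj r t"
  have "c (x # t) = 0" for x using chain_zero[OF c] os_tl t by blast
  then show "bdry X adj (Suc r) c t = 0" using bdry_formula[OF c] by simp
next
  fix t p assume t: "osimplex X adj r t" and p: "p permutes {..<Suc r}"
  have lt: "length t = Suc r" using t unfolding osimplex_def by simp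
  have pt: "p permutes {..<length t}" using p lt by simp
  have sp: "shiftp p permutes {..<Suc (Suc r)}" using shiftp_permutes[OF p] .
  have "c (x # permute_list p t) = of_int (sign p) * c (x # t)" for x
  proof -
    have "c (x # permute_list p t) = c (permute_list (shiftp p) (x # t))" using permute_list_shiftp[OF pt] by simp
    also have "\<dots> = of_int (sign (shiftp p)) * c (x # t)" using chain_alt[OF c _ sp] lt by simp
    finally show ?thesis using sign_shiftp[OF p] by simp
  qed
  then show "bdry X adj (Suc r) c (permute_list_by p t) = of_int (sign p) * bdry X adj (Suc r) c t"
    unfolding permute_list_by_eq bdry_formula[OF c] by (simp add: sum_distrib_left)
qed

lemma bdry_bdry:
  assumes c: "c \<in> chains X adj (Suc (Suc r))"
  shows "bdry X adj (Suc r) (bdry X adj (Suc (Suc r)) c) = (\<lambda>_. 0)"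
proof
  fix t
  have bc: "bdry X adj (Suc (Suc r)) c \<in> chains X adj (Suc r)" by (rule bdry_in[OF c])
  have anti: "c (x # y # t) = - c (y # x # t)" for x y
  proof (cases "length t = Suc r")
    case True
    have tp: "Transposition.transpose 0 1 permutes {..<Suc (Suc (Suc r))}" by (intro permutes_swap_id) auto
    have "c (permute_list (Transposition.transpose 0 1) (x # y # t)) = of_int (sign (Transposition.transpose (0::nat) 1)) * c (x # y # t)"
      using chain_alt[OF c _ tp] True by simp
    then have "c (y # x # t) = - c (x # y # t)" unfolding permute_swap01 by (simp add: sign_swap_id)
    then show ?thesis by simp
  next
    case False
    then have "\<not> osimplex X adj (Suc (Suc r)) (x # y # t)" "\<not> osimplex X adj (Suc (Suc r)) (y # x # t)"
      unfolding osimplex_def by auto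
    then show ?thesis using chain_zero[OF c] by simp
  qed
  define S where "S = (\<Sum>y\<in>X. \<Sum>x\<in>X. c (x # y # t))"
  have "S = (\<Sum>y\<in>X. \<Sum>x\<in>X. - c (y # x # t))" unfolding S_def by (intro sum.cong refl) (rule anti)
  also have "\<dots> = - (\<Sum>x\<in>X. \<Sum>y\<in>X. c (y # x # t))" by (subst sum.swap) (simp add: sum_negf)
  also have "\<dots> = - S" unfolding S_def by simp
  finally have "S = 0" by simp
  then show "bdry X adj (Suc r) (bdry X adj (Suc (Suc r)) c) t = 0"
    unfolding bdry_formula[OF bc] bdry_formula[OF c] S_def by simp
qed

end

definition idx :: "'a list \<Rightarrow> 'a \<Rightarrow> nat" where
  "idx t y = (SOME i. i < length t \<and> t ! i = y)"

lemma idx: "y \<in> set t \<Longrightarrow> idx t y < length t \<and> t ! idx t y = y"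
  unfolding idx_def by (rule someI_ex) (simp add: in_set_conv_nth)

context fimg
begin

lemma invol_zero:
  assumes c: "c \<in> chains X adj (Suc r)"
  shows "(\<Sum>s\<in>{s\<in>OS (Suc r). map f (tl s) = t \<and> f (hd s) \<in> set t}. c s) = 0"
proof -
  define A where "A = {s\<in>OS (Suc r). map f (tl s) = t \<and> f (hd s) \<in> set t}"
  define \<kappa> where "\<kappa> s = Suc (idx t (f (hd s)))" for s
  define \<iota> where "\<iota> s = permute_list (Transposition.transpose 0 (\<kappa> s)) s" for s
  have key: "\<iota> s \<in> A \<and> \<iota> (\<iota> s) = s \<and> c (\<iota> s) = - c s" if s: "s \<in> A" for s
  proof -
    have os: "osimplex X adj (Suc r) s" and mt: "map f (tl s) = t" and ft: "f (hd s) \<in> set t"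
      using s unfolding A_def by auto
    have ls: "length s = Suc (Suc r)" using os unfolding osimplex_def by simp
    then obtain a u where su: "s = a # u" by (cases s) auto
    have lu: "length u = Suc r" using ls su by simp
    have mu: "map f u = t" using mt su by simp
    have lt: "length t = Suc r" using mu lu by auto
    define k where "k = idx t (f a)"
    have "idx t (f a) < length t" using ft su idx[of "f a" t] by simp
    then have k: "k < Suc r" using lt unfolding k_def by simp
    have kap: "\<kappa> s = Suc k" unfolding \<kappa>_def k_def su by simp
    let ?\<tau> = "Transposition.transpose 0 (Suc k)"
    have tp: "?\<tau> permutes {..<Suc (Suc r)}" using k by (intro permutes_swap_id) auto
    have tps: "?\<tau> permutes {..<length s}" using tp ls by simp
    have is_eq: "\<iota> s = permute_list ?\<tau> s" unfolding \<iota>_def kap ..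
    have fuk: "f (u ! k) = f a"
    proof -
      have "f (u ! k) = map f u ! k" using k lu by simp
      also have "\<dots> = t ! k" using mu by simp
      also have "\<dots> = f a" unfolding k_def using ft su idx[of "f a" t] by simp
      finally show ?thesis .
    qed
    have mfi: "map f (\<iota> s) = map f s"
    proof -
      have "map f (\<iota> s) = permute_list ?\<tau> (map f s)" unfolding is_eq by (rule permute_list_map[OF tps, symmetric])
      also have "\<dots> = map f s"
        by (rule permute_list_transpose_same) (use ls su fuk k in auto)
      finally show ?thesis .
    qed
    have osi: "osimplex X adj (Suc r) (\<iota> s)" unfolding is_eq by (rule OS_permute[OF tp os])
    have lis: "length (\<iota> s) = Suc (Suc r)" unfolding is_eq using ls by simp
    then obtain b w where bw: "\<iota> s = b # w" by (cases "\<iota> s") auto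
    have fb: "f b = f a" and mw: "map f w = t" using mfi bw su mu by auto
    have iA: "\<iota> s \<in> A" unfolding A_def using osi fb mw bw ft su by auto
    have kapi: "\<kappa> (\<iota> s) = Suc k" unfolding \<kappa>_def k_def bw using fb by simp
    have ii: "\<iota> (\<iota> s) = s"
    proof -
      have "\<iota> (\<iota> s) = permute_list (Transposition.transpose 0 (\<kappa> (\<iota> s))) (\<iota> s)" by (rule \<iota>_def)
      also have "\<dots> = permute_list ?\<tau> (permute_list ?\<tau> s)" unfolding kapi by (simp only: is_eq)
      also have "\<dots> = permute_list (?\<tau> \<circ> ?\<tau>) s" using permute_list_compose[OF tps, of ?\<tau>] by simp
      also have "\<dots> = s" by simp
      finally show ?thesis .
    qed
    have ci: "c (\<iota> s) = - c s" unfolding is_eq using chain_alt[OF c ls tp] by (simp add: sign_swap_id)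
    show ?thesis using iA ii ci by blast
  qed
  have bij: "bij_betw \<iota> A A" by (rule bij_betw_byWitness[where f'=\<iota>]) (use key in auto)
  have "(\<Sum>s\<in>A. c s) = (\<Sum>s\<in>A. c (\<iota> s))" using sum.reindex_bij_betw[OF bij, of c] by simp
  also have "\<dots> = (\<Sum>s\<in>A. - c s)" by (rule sum.cong) (use key in auto)
  finally have "(\<Sum>s\<in>A. c s) = 0" by (simp add: sum_negf)
  then show ?thesis unfolding A_def .
qed

lemma chain_map_bdry:
  assumes c: "c \<in> chains X adj (Suc r)"
  shows "bdry X adj (Suc r) (chain_map X adj f (Suc r) c) = chain_map X adj f r (bdry X adj (Suc r) c)"
proof (rule ext)
  fix t
  have Fc: "chain_map X adj f (Suc r) c \<in> chains X adj (Suc r)" by (rule chain_map_in[OF c])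
  have bc: "bdry X adj (Suc r) c \<in> chains X adj r" by (rule bdry_in[OF c])
  show "bdry X adj (Suc r) (chain_map X adj f (Suc r) c) t = chain_map X adj f r (bdry X adj (Suc r) c) t"
  proof (cases "distinct t")
    case False
    have "chain_map X adj f (Suc r) c (x # t) = 0" for x using cm_formula[OF c, of "x # t"] False by simp
    then show ?thesis unfolding bdry_formula[OF Fc] using cm_formula[OF bc, of t] False by simp
  next
    case True
    let ?O = "OS (Suc r)"
    have L: "bdry X adj (Suc r) (chain_map X adj f (Suc r) c) t =
        (\<Sum>s\<in>?O. if map f (tl s) = t \<and> f (hd s) \<notin> set t then c s else 0)"
    proof -
      have "bdry X adj (Suc r) (chain_map X adj f (Suc r) c) t =
          (\<Sum>x\<in>X. \<Sum>s\<in>?O. if x \<notin> set t \<and> map f s = x # t then c s else 0)"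
        unfolding bdry_formula[OF Fc]
      proof (rule sum.cong[OF refl])
        fix x assume "x \<in> X"
        show "chain_map X adj f (Suc r) c (x # t) = (\<Sum>s\<in>?O. if x \<notin> set t \<and> map f s = x # t then c s else 0)"
        proof (cases "x \<in> set t")
          case True then show ?thesis using cm_formula[OF c, of "x # t"] by simp
        next
          case False then show ?thesis using cm_formula'[OF c, of "x # t"] \<open>distinct t\<close> by simp
        qed
      qed
      also have "\<dots> = (\<Sum>s\<in>?O. \<Sum>x\<in>X. if x \<notin> set t \<and> map f s = x # t then c s else 0)"
        by (rule sum.swap)
      also have "\<dots> = (\<Sum>s\<in>?O. if map f (tl s) = t \<and> f (hd s) \<notin> set t then c s else 0)"
      proof (rule sum.cong[OF refl])
        fix s assume s: "s \<in> ?O"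
        then have "length s = Suc (Suc r)" unfolding osimplex_def by simp
        then obtain a u where su: "s = a # u" by (cases s) auto
        have aX: "f a \<in> X" using s su fX unfolding osimplex_def by auto
        have "(\<Sum>x\<in>X. if x \<notin> set t \<and> map f s = x # t then c s else 0) =
            (\<Sum>x\<in>X. if f a = x then (if f a \<notin> set t \<and> map f u = t then c s else 0) else 0)"
          by (rule sum.cong) (auto simp: su)
        also have "\<dots> = (if f a \<notin> set t \<and> map f u = t then c s else 0)"
          using finX aX by (simp add: sum.delta)
        finally show "(\<Sum>x\<in>X. if x \<notin> set t \<and> map f s = x # t then c s else 0) =
            (if map f (tl s) = t \<and> f (hd s) \<notin> set t then c s else 0)" using su by auto
      qed
      finally show ?thesis .
    qed
    have R: "chain_map X adj f r (bdry X adj (Suc r) c) t = (\<Sum>s\<in>?O. if map f (tl s) = t then c s else 0)"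
    proof -
      have "chain_map X adj f r (bdry X adj (Suc r) c) t =
          (\<Sum>u\<in>OS r. if map f u = t then bdry X adj (Suc r) c u else 0)"
        by (rule cm_formula'[OF bc True])
      also have "\<dots> = (\<Sum>u\<in>OS r. \<Sum>s\<in>?O. if tl s = u then (if map f u = t then c s else 0) else 0)"
      proof (rule sum.cong[OF refl])
        fix u
        have "bdry X adj (Suc r) c u = (\<Sum>s\<in>?O. if tl s = u then c s else 0)"
          unfolding bdry_formula[OF c] tl_sum[OF c, symmetric] by (simp only: sum.inter_filter[OF finite_OS])
        then show "(if map f u = t then bdry X adj (Suc r) c u else 0) =
            (\<Sum>s\<in>?O. if tl s = u then (if map f u = t then c s else 0) else 0)"
          by (cases "map f u = t") (simp_all cong: if_cong)
      qed
      also have "\<dots> = (\<Sum>s\<in>?O. \<Sum>u\<in>OS r. if tl s = u then (if map f u = t then c s else 0) else 0)"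
        by (rule sum.swap)
      also have "\<dots> = (\<Sum>s\<in>?O. if map f (tl s) = t then c s else 0)"
      proof (rule sum.cong[OF refl])
        fix s assume s: "s \<in> ?O"
        then have "length s = Suc (Suc r)" unfolding osimplex_def by simp
        then obtain a u where su: "s = a # u" by (cases s) auto
        have "tl s \<in> OS r" using s su os_tl by auto
        then show "(\<Sum>u\<in>OS r. if tl s = u then (if map f u = t then c s else 0) else 0) =
            (if map f (tl s) = t then c s else 0)"
          using finite_OS by (simp add: sum.delta)
      qed
      finally show ?thesis .
    qed
    have Z: "(\<Sum>s\<in>?O. if map f (tl s) = t \<and> f (hd s) \<in> set t then c s else 0) = 0"
      using invol_zero[OF c, of t] by (simp only: sum.inter_filter[OF finite_OS])
    have "(\<Sum>s\<in>?O. if map f (tl s) = t then c s else 0) =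
        (\<Sum>s\<in>?O. (if map f (tl s) = t \<and> f (hd s) \<notin> set t then c s else 0) +
                  (if map f (tl s) = t \<and> f (hd s) \<in> set t then c s else 0))"
      by (rule sum.cong) auto
    also have "\<dots> = (\<Sum>s\<in>?O. if map f (tl s) = t \<and> f (hd s) \<notin> set t then c s else 0)"
      using Z by (simp add: sum.distrib)
    finally show ?thesis using L R by simp
  qed
qed

end

lemma sum_single:
  assumes "i < (n::nat)" "\<And>j. j < n \<Longrightarrow> j \<noteq> i \<Longrightarrow> F j = (0::rat)"
  shows "(\<Sum>j<n. F j) = F i"
proof -
  have "(\<Sum>j<n. F j) = (\<Sum>j<n. if j = i then F i else 0)" by (rule sum.cong) (use assms in auto)
  also have "\<dots> = F i" using assms(1) by simp
  finally show ?thesis .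
qed

context fimg
begin

lemma gen_in_chains:
  assumes u: "osimplex X adj q u"
  shows "gen u \<in> chains X adj q"
  unfolding chains_def
proof (intro CollectI conjI allI impI)
  have lu: "length u = Suc q" and du: "distinct u" using u unfolding osimplex_def by auto
  {
    fix t assume t: "\<not> osimplex X adj q t"
    show "gen u t = 0"
    proof (rule ccontr)
      assume "gen u t \<noteq> 0"
      then obtain p where p: "p permutes {..<length u}" "t = permute_list p u" using gen_zero[of u t] by blast
      then have "osimplex X adj q t" using OS_permute[of p q u] u lu by simp
      then show False using t by simp
    qed
  }
  fix t p assume t: "osimplex X adj q t" and p: "p permutes {..<Suc q}"
  have lt: "length t = Suc q" using t unfolding osimplex_def by simp
  show "gen u (permute_list_by p t) = of_int (sign p) * gen u t"
    unfolding permute_list_by_eq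
  proof (cases "\<exists>r. r permutes {..<length u} \<and> t = permute_list r u")
    case True
    then obtain r where r: "r permutes {..<length u}" "t = permute_list r u" by blast
    have pu: "p permutes {..<length u}" using p lu by simp
    have e: "permute_list p t = permute_list (r \<circ> p) u" using permute_list_compose[OF pu, of r] r by simp
    have rp: "r \<circ> p permutes {..<length u}" using permutes_compose[OF pu r(1)] .
    have "gen u (permute_list p t) = of_int (sign (r \<circ> p))" using gen_eq[OF du rp e] .
    also have "\<dots> = of_int (sign r) * of_int (sign p)"
      using sign_compose[OF permutes_imp_permutation[OF _ r(1)] permutes_imp_permutation[OF _ pu]] by simp
    finally show "gen u (permute_list p t) = of_int (sign p) * gen u t" using gen_eq[OF du r] by (simp add: mult.commute)
  next
    case False
    have "\<not> (\<exists>r. r permutes {..<length u} \<and> permute_list p t = permute_list r u)"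
    proof
      assume "\<exists>r. r permutes {..<length u} \<and> permute_list p t = permute_list r u"
      then obtain r where r: "r permutes {..<length u}" "permute_list p t = permute_list r u" by blast
      have pt: "p permutes {..<length t}" using p lt by simp
      have ipu: "inv p permutes {..<length u}" using permutes_inv[OF p] lu by simp
      have "t = permute_list (inv p) (permute_list p t)" using permute_list_inv_cancel[OF pt] by simp
      also have "\<dots> = permute_list (r \<circ> inv p) u" using r(2) permute_list_compose[OF ipu, of r] by simp
      finally show False using False permutes_compose[OF ipu r(1)] by blast
    qed
    then have "gen u (permute_list p t) = 0" by (rule gen_zero)
    moreover have "gen u t = 0" using False by (rule gen_zero)
    ultimately show "gen u (permute_list p t) = of_int (sign p) * gen u t" by simp
  qed
qed

lemma chain_val:
  assumes c: "c \<in> chains X adj q" and t: "osimplex X adj q t" and v: "osimplex X adj q v" and st: "set v = set t"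
  shows "c t = c v * gen v t"
proof -
  have "mset t = mset v" using t v st unfolding osimplex_def by (simp add: set_eq_iff_mset_eq_distinct)
  then obtain r where r: "r permutes {..<length v}" "permute_list r v = t" by (rule mset_eq_permutation)
  have lv: "length v = Suc q" using v unfolding osimplex_def by simp
  have dv: "distinct v" using v unfolding osimplex_def by simp
  have "c t = of_int (sign r) * c v" using chain_alt[OF c lv] r lv by auto
  moreover have "gen v t = of_int (sign r)" using gen_eq[OF dv r(1)] r(2) by simp
  ultimately show ?thesis by simp
qed

lemma trace_chains_zero:
  assumes nofix: "\<And>\<sigma>. is_simplex X adj \<sigma> \<Longrightarrow> f ` \<sigma> \<noteq> \<sigma>"
  shows "quot_trace (chains X adj q) {\<lambda>_. 0} (chain_map X adj f q) = 0"
proof -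
  define Sig where "Sig = set ` OS q"
  have finSig: "finite Sig" unfolding Sig_def using finite_OS by simp
  define rep where "rep \<sigma> = (SOME s. osimplex X adj q s \<and> set s = \<sigma>)" for \<sigma>
  have rep: "osimplex X adj q (rep \<sigma>) \<and> set (rep \<sigma>) = \<sigma>" if "\<sigma> \<in> Sig" for \<sigma>
    unfolding rep_def by (rule someI_ex) (use that Sig_def in auto)
  obtain sl where sl: "set sl = Sig" "distinct sl" using finite_distinct_list[OF finSig] by blast
  define hs where "hs = map (\<lambda>\<sigma>. gen (rep \<sigma>)) sl"
  have lhs: "length hs = length sl" unfolding hs_def by simp
  have hsi: "hs ! i = gen (rep (sl ! i))" if "i < length sl" for i unfolding hs_def using that by simp
  have repi: "osimplex X adj q (rep (sl ! i)) \<and> set (rep (sl ! i)) = sl ! i" if "i < length sl" for i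
    using rep sl that by auto
  have uniq: "i = j" if "i < length sl" "j < length sl" "sl ! i = sl ! j" for i j
    using sl(2) that nth_eq_iff_index_eq by blast
  have genij: "gen (rep (sl ! j)) (rep (sl ! i)) = (if j = i then 1 else 0)" if "i < length sl" "j < length sl" for i j
  proof (cases "j = i")
    case True then show ?thesis using gen_self repi that unfolding osimplex_def by auto
  next
    case False
    have "gen (rep (sl ! j)) (rep (sl ! i)) = 0"
    proof (rule ccontr)
      assume "gen (rep (sl ! j)) (rep (sl ! i)) \<noteq> 0"
      then have "set (rep (sl ! i)) = set (rep (sl ! j))" by (rule gen_nz_set)
      then have "sl ! i = sl ! j" using repi that by simp
      then show False using uniq that False by blast
    qed
    then show ?thesis using False by simp
  qed
  have span: "(\<lambda>t. c t - lin_comb hs (\<lambda>i. c (rep (sl ! i))) t) \<in> {\<lambda>_. 0}" if c: "c \<in> chains X adj q" for c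
  proof -
    have "lin_comb hs (\<lambda>i. c (rep (sl ! i))) t = c t" for t
    proof (cases "osimplex X adj q t")
      case False
      have "gen (rep (sl ! i)) t = 0" if "i < length sl" for i
        using chain_zero[OF gen_in_chains False] repi that by blast
      then show ?thesis unfolding lin_comb_def lhs using chain_zero[OF c False] by (simp add: hsi)
    next
      case True
      have "set t \<in> Sig" unfolding Sig_def using True by auto
      then obtain i where i: "i < length sl" "sl ! i = set t" using sl(1) by (metis in_set_conv_nth)
      have "lin_comb hs (\<lambda>i. c (rep (sl ! i))) t = (\<Sum>j<length sl. c (rep (sl ! j)) * gen (rep (sl ! j)) t)"
        unfolding lin_comb_def lhs by (intro sum.cong refl) (simp add: hsi)
      also have "\<dots> = c (rep (sl ! i)) * gen (rep (sl ! i)) t"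
      proof (rule sum_single[OF i(1)])
        fix j assume j: "j < length sl" "j \<noteq> i"
        have "gen (rep (sl ! j)) t = 0"
        proof (rule ccontr)
          assume "gen (rep (sl ! j)) t \<noteq> 0"
          then have "set t = set (rep (sl ! j))" by (rule gen_nz_set)
          then have "sl ! j = sl ! i" using repi j i by simp
          then show False using uniq j i by blast
        qed
        then show "c (rep (sl ! j)) * gen (rep (sl ! j)) t = 0" by simp
      qed
      also have "\<dots> = c t"
      proof -
        have "osimplex X adj q (rep (sl ! i))" "set (rep (sl ! i)) = set t" using repi[OF i(1)] i(2) by auto
        from chain_val[OF c True this] show ?thesis by simp
      qed
      finally show ?thesis .
    qed
    then show ?thesis by simp
  qed
  have qb: "quot_basis (chains X adj q) {\<lambda>_. 0} hs"
    unfolding quot_basis_def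
  proof (intro conjI ballI allI impI)
    show "set hs \<subseteq> chains X adj q" unfolding hs_def using gen_in_chains rep sl by auto
  next
    fix z assume "z \<in> chains X adj q" then show "\<exists>a. (\<lambda>t. z t - lin_comb hs a t) \<in> {\<lambda>_. 0}" using span by blast
  next
    fix a i assume a: "lin_comb hs a \<in> {\<lambda>_. 0}" and i: "i < length hs"
    have "0 = lin_comb hs a (rep (sl ! i))" using a by simp
    also have "\<dots> = (\<Sum>j<length sl. a j * gen (rep (sl ! j)) (rep (sl ! i)))"
      unfolding lin_comb_def lhs by (intro sum.cong refl) (simp add: hsi)
    also have "\<dots> = a i * gen (rep (sl ! i)) (rep (sl ! i))"
      by (rule sum_single) (use i lhs genij in auto)
    also have "\<dots> = a i" using genij i lhs by simp
    finally show "a i = 0" by simp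
  qed
  have sO: "subsp {(\<lambda>_. 0) :: 'a list \<Rightarrow> rat}" unfolding subsp_def by simp
  have g: "linmap (chain_map X adj f q)" "chain_map X adj f q ` chains X adj q \<subseteq> chains X adj q"
    "chain_map X adj f q ` {\<lambda>_. 0} \<subseteq> {\<lambda>_. 0}"
    using linmap_chain_map chain_map_in linmap_0[OF linmap_chain_map] by auto
  have "quot_trace (chains X adj q) {\<lambda>_. 0} (chain_map X adj f q) = trace_wrt {\<lambda>_. 0} hs (chain_map X adj f q)"
    by (rule quot_trace_basis[OF qb sO subsp_chains g])
  also have "\<dots> = 0" unfolding trace_wrt_def
  proof (rule sum.neutral, intro ballI)
    fix i assume "i \<in> {..<length hs}"
    then have i: "i < length sl" using lhs by simp
    let ?v = "rep (sl ! i)"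
    have v: "osimplex X adj q ?v" "set ?v = sl ! i" using repi[OF i] by auto
    have gv: "gen ?v \<in> chains X adj q" using gen_in_chains v(1) .
    have Fv: "chain_map X adj f q (gen ?v) \<in> chains X adj q" using chain_map_in[OF gv] .
    have co: "coords {\<lambda>_. 0} hs (chain_map X adj f q (gen ?v)) i = chain_map X adj f q (gen ?v) ?v"
      using coords_eq[OF qb sO Fv span[OF Fv]] i lhs by simp
    have dv: "distinct ?v" using v unfolding osimplex_def by simp
    have "chain_map X adj f q (gen ?v) ?v = (\<Sum>s\<in>{s\<in>OS q. map f s = ?v}. gen ?v s)"
      using cm_formula[OF gv] dv by simp
    also have "\<dots> = 0"
    proof (rule sum.neutral, intro ballI)
      fix s assume s: "s \<in> {s\<in>OS q. map f s = ?v}"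
      show "gen ?v s = 0"
      proof (rule ccontr)
        assume "gen ?v s \<noteq> 0"
        from gen_nz_set[OF this] have ss: "set s = sl ! i" using v(2) by simp
        have "f ` (sl ! i) = set (map f s)" using ss by simp
        also have "\<dots> = sl ! i" using s v by simp
        finally have fix1: "f ` (sl ! i) = sl ! i" .
        have "?v \<noteq> []" using v(1) unfolding osimplex_def by auto
        then have "set ?v \<noteq> {}" by simp
        then have "is_simplex X adj (set ?v)" using v(1) unfolding is_simplex_def osimplex_def by blast
        then have "is_simplex X adj (sl ! i)" using v(2) by simp
        then show False using nofix fix1 by blast
      qed
    qed
    finally show "coords {\<lambda>_. 0} hs (chain_map X adj f q (hs ! i)) i = 0" using co hsi[OF i] by simp
  qed
  finally show ?thesis .
qed

end

lemma subsp_O: "subsp {(\<lambda>_. 0) :: 'b \<Rightarrow> rat}" unfolding subsp_def by simp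

lemma quot_basis_self: "subsp Z \<Longrightarrow> quot_basis Z Z []"
  unfolding quot_basis_def lin_comb_def by simp

lemma quot_trace_self:
  assumes "subsp Z" "linmap g" "g ` Z \<subseteq> Z"
  shows "quot_trace Z Z g = 0"
  using quot_trace_basis[OF quot_basis_self[OF assms(1)] assms(1) assms(1) assms(2) assms(3) assms(3)]
  unfolding trace_wrt_def by simp

lemma aux_lin: "(\<Sum>q\<in>A. (c q :: rat) * (- (x q + y q))) = - ((\<Sum>q\<in>A. c q * x q) + (\<Sum>q\<in>A. c q * y q))"
proof -
  have "(\<Sum>q\<in>A. (c q :: rat) * (- (x q + y q))) = (\<Sum>q\<in>A. - (c q * x q) + - (c q * y q))"
    by (rule sum.cong) (simp_all add: algebra_simps)
  also have "\<dots> = - ((\<Sum>q\<in>A. c q * x q) + (\<Sum>q\<in>A. c q * y q))"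
    by (simp only: sum.distrib sum_negf minus_add)
  finally show ?thesis .
qed

context fimg
begin

lemma cycles_sub: "cycles X adj q \<subseteq> chains X adj q" unfolding cycles_def by auto

lemma subsp_cycles: "subsp (cycles X adj q)"
proof -
  have l: "linmap (bdry X adj q)" by (rule linmap_bdry)
  show ?thesis unfolding subsp_def cycles_def
    using subsp_0[OF subsp_chains] subsp_add[OF subsp_chains] subsp_scale[OF subsp_chains]
      linmap_0[OF l] linmap_add[OF l] linmap_scale[OF l]
    by (auto simp: fun_eq_iff)
qed

lemma subsp_boundaries: "subsp (boundaries X adj q)"
proof -
  have l: "linmap (bdry X adj (Suc q))" by (rule linmap_bdry)
  have "(\<lambda>_. 0) = bdry X adj (Suc q) (\<lambda>_. 0)" using linmap_0[OF l] by simp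
  then have z: "(\<lambda>_. 0) \<in> boundaries X adj q" unfolding boundaries_def using subsp_0[OF subsp_chains] by blast
  show ?thesis unfolding subsp_def
  proof (intro conjI ballI allI)
    show "(\<lambda>_. 0) \<in> boundaries X adj q" by (rule z)
  next
    fix x y assume "x \<in> boundaries X adj q" "y \<in> boundaries X adj q"
    then obtain a b where ab: "a \<in> chains X adj (Suc q)" "b \<in> chains X adj (Suc q)"
      "x = bdry X adj (Suc q) a" "y = bdry X adj (Suc q) b" unfolding boundaries_def by auto
    then have "(\<lambda>t. x t + y t) = bdry X adj (Suc q) (\<lambda>t. a t + b t)" using linmap_add[OF l] by simp
    moreover have "(\<lambda>t. a t + b t) \<in> chains X adj (Suc q)" using subsp_add[OF subsp_chains ab(1,2)] .
    ultimately show "(\<lambda>t. x t + y t) \<in> boundaries X adj q" unfolding boundaries_def by blast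
  next
    fix c x assume "x \<in> boundaries X adj q"
    then obtain a where a: "a \<in> chains X adj (Suc q)" "x = bdry X adj (Suc q) a" unfolding boundaries_def by auto
    then have "(\<lambda>t. c * x t) = bdry X adj (Suc q) (\<lambda>t. c * a t)" using linmap_scale[OF l] by simp
    moreover have "(\<lambda>t. c * a t) \<in> chains X adj (Suc q)" using subsp_scale[OF subsp_chains a(1)] .
    ultimately show "(\<lambda>t. c * x t) \<in> boundaries X adj q" unfolding boundaries_def by blast
  qed
qed

lemma bd_sub: "boundaries X adj q \<subseteq> cycles X adj q"
proof
  fix x assume "x \<in> boundaries X adj q"
  then obtain a where a: "a \<in> chains X adj (Suc q)" "x = bdry X adj (Suc q) a" unfolding boundaries_def by auto
  have xc: "x \<in> chains X adj q" using bdry_in[OF a(1)] a(2) by simp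
  show "x \<in> cycles X adj q"
  proof (cases q)
    case 0 then show ?thesis using xc unfolding cycles_def by simp
  next
    case (Suc r)
    then have "bdry X adj q x = (\<lambda>_. 0)" using bdry_bdry[of a r] a by simp
    then show ?thesis using xc unfolding cycles_def by simp
  qed
qed

lemma O_sub: "{\<lambda>_. 0} \<subseteq> boundaries X adj q"
  using subsp_0[OF subsp_boundaries] by auto

lemma g_chains: "chain_map X adj f q ` chains X adj q \<subseteq> chains X adj q"
  using chain_map_in by auto

lemma g_O: "chain_map X adj f q ` {\<lambda>_. 0} \<subseteq> {\<lambda>_. 0}"
  using linmap_0[OF linmap_chain_map] by auto

lemma g_cycles: "chain_map X adj f q ` cycles X adj q \<subseteq> cycles X adj q"
proof
  fix y assume "y \<in> chain_map X adj f q ` cycles X adj q"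
  then obtain c where c: "c \<in> cycles X adj q" "y = chain_map X adj f q c" by auto
  have cc: "c \<in> chains X adj q" using c cycles_sub by auto
  have yc: "y \<in> chains X adj q" using chain_map_in[OF cc] c by simp
  show "y \<in> cycles X adj q"
  proof (cases q)
    case 0 then show ?thesis using yc unfolding cycles_def by simp
  next
    case (Suc r)
    have "bdry X adj q c = (\<lambda>_. 0)" using c Suc unfolding cycles_def by simp
    then have "bdry X adj q y = chain_map X adj f r (\<lambda>_. 0)"
      using chain_map_bdry[of c r] cc Suc c(2) by simp
    also have "\<dots> = (\<lambda>_. 0)" by (rule linmap_0[OF linmap_chain_map])
    finally show ?thesis using yc unfolding cycles_def by simp
  qed
qed

lemma g_bd: "chain_map X adj f q ` boundaries X adj q \<subseteq> boundaries X adj q"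
proof
  fix y assume "y \<in> chain_map X adj f q ` boundaries X adj q"
  then obtain a where a: "a \<in> chains X adj (Suc q)" "y = chain_map X adj f q (bdry X adj (Suc q) a)"
    unfolding boundaries_def by auto
  then have "y = bdry X adj (Suc q) (chain_map X adj f (Suc q) a)" using chain_map_bdry[OF a(1)] by simp
  then show "y \<in> boundaries X adj q" unfolding boundaries_def using chain_map_in[OF a(1)] by blast
qed

lemma qb_exists:
  assumes "subsp Z" "subsp B" "B \<subseteq> Z" "Z \<subseteq> chains X adj q"
  shows "\<exists>hs. quot_basis Z B hs"
proof (rule quot_basis_exists[OF finite_OS[of q] assms(1-3)])
  show "\<forall>z\<in>Z. \<forall>t. t \<notin> OS q \<longrightarrow> z t = 0" using assms(4) chain_zero by blast
qed

lemma decomp: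
  "quot_trace (chains X adj q) {\<lambda>_. 0} (chain_map X adj f q) =
     quot_trace (chains X adj q) (cycles X adj q) (chain_map X adj f q) +
     quot_trace (cycles X adj q) (boundaries X adj q) (chain_map X adj f q) +
     quot_trace (boundaries X adj q) {\<lambda>_. 0} (chain_map X adj f q)"
proof -
  let ?C = "chains X adj q" and ?Z = "cycles X adj q" and ?B = "boundaries X adj q" and ?O = "{(\<lambda>_. 0) :: 'a list \<Rightarrow> rat}"
    and ?g = "chain_map X adj f q"
  have sC: "subsp ?C" by (rule subsp_chains)
  have sZ: "subsp ?Z" by (rule subsp_cycles)
  have sB: "subsp ?B" by (rule subsp_boundaries)
  have sO: "subsp ?O" by (rule subsp_O)
  have ZC: "?Z \<subseteq> ?C" by (rule cycles_sub)
  have BZ: "?B \<subseteq> ?Z" by (rule bd_sub)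
  have OB: "?O \<subseteq> ?B" by (rule O_sub)
  have BC: "?B \<subseteq> ?C" using BZ ZC by blast
  have gl: "linmap ?g" by (rule linmap_chain_map)
  note gC = g_chains[of q] and gZ = g_cycles[of q] and gB = g_bd[of q] and gO = g_O[of q]
  obtain hs1 where h1: "quot_basis ?C ?Z hs1" using qb_exists[OF sC sZ ZC] by blast
  obtain hs2 where h2: "quot_basis ?Z ?B hs2" using qb_exists[OF sZ sB BZ ZC] by blast
  obtain hs3 where h3: "quot_basis ?B ?O hs3" using qb_exists[OF sB sO OB BC] by blast
  have q12: "quot_basis ?C ?B (hs1 @ hs2)" by (rule quot_basis_append(1)[OF sB sZ sC BZ ZC h1 h2])
  have q123: "quot_basis ?C ?O ((hs1 @ hs2) @ hs3)" by (rule quot_basis_append(1)[OF sO sB sC OB BC q12 h3])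
  have "quot_trace ?C ?O ?g = trace_wrt ?O ((hs1 @ hs2) @ hs3) ?g"
    by (rule quot_trace_basis[OF q123 sO sC gl gC gO])
  also have "\<dots> = trace_wrt ?B (hs1 @ hs2) ?g + trace_wrt ?O hs3 ?g"
    by (rule trace_append[OF sO sB sC OB BC q12 h3 gl gC gB gO])
  also have "trace_wrt ?B (hs1 @ hs2) ?g = trace_wrt ?Z hs1 ?g + trace_wrt ?B hs2 ?g"
    by (rule trace_append[OF sB sZ sC BZ ZC h1 h2 gl gC gZ gB])
  also have "trace_wrt ?Z hs1 ?g = quot_trace ?C ?Z ?g" by (rule quot_trace_basis[OF h1 sZ sC gl gC gZ, symmetric])
  also have "trace_wrt ?B hs2 ?g = quot_trace ?Z ?B ?g" by (rule quot_trace_basis[OF h2 sB sZ gl gZ gB, symmetric])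
  also have "trace_wrt ?O hs3 ?g = quot_trace ?B ?O ?g" by (rule quot_trace_basis[OF h3 sO sB gl gB gO, symmetric])
  finally show ?thesis .
qed

lemma e0: "quot_trace (chains X adj 0) (cycles X adj 0) (chain_map X adj f 0) = 0"
proof -
  have "cycles X adj 0 = chains X adj 0" unfolding cycles_def by auto
  then show ?thesis using quot_trace_self[OF subsp_chains linmap_chain_map g_chains] by simp
qed

lemma e_succ:
  "quot_trace (chains X adj (Suc r)) (cycles X adj (Suc r)) (chain_map X adj f (Suc r)) =
   quot_trace (boundaries X adj r) {\<lambda>_. 0} (chain_map X adj f r)"
proof -
  let ?C = "chains X adj (Suc r)" and ?Z = "cycles X adj (Suc r)" and ?B = "boundaries X adj r"
    and ?O = "{(\<lambda>_. 0) :: 'a list \<Rightarrow> rat}" and ?d = "bdry X adj (Suc r)"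
  obtain hs where h: "quot_basis ?C ?Z hs" using qb_exists[OF subsp_chains subsp_cycles cycles_sub order.refl] by blast
  have dU: "?d ` ?C = ?B" unfolding boundaries_def ..
  have dW: "?d u \<in> ?O \<longleftrightarrow> u \<in> ?Z" if "u \<in> ?C" for u using that unfolding cycles_def by auto
  have qb: "quot_basis ?B ?O (map ?d hs)"
    by (rule quot_basis_transport(1)[OF subsp_chains subsp_cycles subsp_O cycles_sub h linmap_bdry dU dW])
  have comm: "chain_map X adj f r (?d u) = ?d (chain_map X adj f (Suc r) u)" if "u \<in> ?C" for u
    using chain_map_bdry[OF that] by simp
  have "quot_trace ?C ?Z (chain_map X adj f (Suc r)) = trace_wrt ?Z hs (chain_map X adj f (Suc r))"
    by (rule quot_trace_basis[OF h subsp_cycles subsp_chains linmap_chain_map g_chains g_cycles])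
  also have "\<dots> = trace_wrt ?O (map ?d hs) (chain_map X adj f r)"
    by (rule trace_transport[OF subsp_chains subsp_cycles subsp_O cycles_sub h linmap_bdry dU dW g_chains comm, symmetric])
  also have "\<dots> = quot_trace ?B ?O (chain_map X adj f r)"
    by (rule quot_trace_basis[OF qb subsp_O subsp_boundaries linmap_chain_map g_bd g_O, symmetric])
  finally show ?thesis .
qed

lemma b_top:
  assumes "card X = Suc m"
  shows "quot_trace (boundaries X adj m) {\<lambda>_. 0} (chain_map X adj f m) = 0"
proof -
  have noos: "\<not> osimplex X adj (Suc m) s" for s
  proof
    assume s: "osimplex X adj (Suc m) s"
    then have "card (set s) = Suc (Suc m)" unfolding osimplex_def by (simp add: distinct_card)
    moreover have "card (set s) \<le> card X" using s finX unfolding osimplex_def by (simp add: card_mono)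
    ultimately show False using assms by simp
  qed
  have "chains X adj (Suc m) \<subseteq> {\<lambda>_. 0}" using chain_zero noos by (auto simp: fun_eq_iff)
  then have "chains X adj (Suc m) = {\<lambda>_. 0}" using subsp_0[OF subsp_chains] by auto
  then have "boundaries X adj m = {bdry X adj (Suc m) (\<lambda>_. 0)}" unfolding boundaries_def by simp
  then have B: "boundaries X adj m = {\<lambda>_. 0}" using linmap_0[OF linmap_bdry] by simp
  show ?thesis unfolding B by (rule quot_trace_self[OF subsp_O linmap_chain_map g_O])
qed

lemma lefschetz_zero:
  assumes nofix: "\<And>\<sigma>. is_simplex X adj \<sigma> \<Longrightarrow> f ` \<sigma> \<noteq> \<sigma>"
  shows "lefschetz X adj f = 0"
proof (cases "card X")
  case 0 then show ?thesis unfolding lefschetz_def by simp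
next
  case (Suc m)
  define z where "z q = quot_trace (cycles X adj q) (boundaries X adj q) (chain_map X adj f q)" for q
  define e where "e q = quot_trace (chains X adj q) (cycles X adj q) (chain_map X adj f q)" for q
  define b where "b q = quot_trace (boundaries X adj q) {\<lambda>_. 0} (chain_map X adj f q)" for q
  have zq: "z q = - (e q + b q)" for q
    using decomp[of q] trace_chains_zero[OF nofix, of q] unfolding z_def e_def b_def by simp
  have e0': "e 0 = 0" unfolding e_def by (rule e0)
  have es: "e (Suc q) = b q" for q unfolding e_def b_def by (rule e_succ)
  have bm: "b m = 0" unfolding b_def by (rule b_top[OF Suc])
  have "(\<Sum>q<Suc m. (-1) ^ q * e q) = e 0 + (\<Sum>q<m. (-1) ^ Suc q * e (Suc q))"
    unfolding sum.lessThan_Suc_shift by simp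
  also have "\<dots> = - (\<Sum>q<m. (-1) ^ q * b q)" using e0' es by (simp add: sum_negf)
  finally have E: "(\<Sum>q<Suc m. (-1) ^ q * e q) = - (\<Sum>q<m. (-1) ^ q * b q)" .
  have Bs: "(\<Sum>q<Suc m. (-1) ^ q * b q) = (\<Sum>q<m. (-1) ^ q * b q)" using bm by simp
  have "lefschetz X adj f = (\<Sum>q<Suc m. (-1) ^ q * z q)" unfolding lefschetz_def z_def Suc ..
  also have "\<dots> = - ((\<Sum>q<Suc m. (-1) ^ q * e q) + (\<Sum>q<Suc m. (-1) ^ q * b q))"
    unfolding zq by (rule aux_lin)
  also have "\<dots> = 0" unfolding E Bs by simp
  finally show ?thesis .
qed

end

theorem theorem3p3:
  fixes X :: "'a set" and adj :: "'a \<Rightarrow> 'a \<Rightarrow> bool" and f :: "'a \<Rightarrow> 'a"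
  assumes "finite X" and "digital_image X adj" and "dcontinuous X adj f"
    and "lefschetz X adj f \<noteq> 0"
  shows "\<exists>\<sigma>. is_simplex X adj \<sigma> \<and> f ` \<sigma> = \<sigma>"
proof (rule ccontr)
  assume "\<not> (\<exists>\<sigma>. is_simplex X adj \<sigma> \<and> f ` \<sigma> = \<sigma>)"
  then have nf: "\<And>\<sigma>. is_simplex X adj \<sigma> \<Longrightarrow> f ` \<sigma> \<noteq> \<sigma>" by blast
  interpret fimg X adj f using assms(1,3) by unfold_locales
  have "lefschetz X adj f = 0" by (rule lefschetz_zero[OF nf])
  then show False using assms(4) by simp
qed

end
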